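(* For all well-typed terms $\Gamma\vdash t:A$ and $\Gamma\vdash u:A$ of $\lambda^{SJ}$: $\Gamma\vdash t\equiv u:A$ holds in $\lambda^{SJ}$ if and only if $[\![t]\!]=[\![u]\!]:[\![\Gamma]\!]\to[\![A]\!]$ in every categorical model of $\lambda^{SJ}$ (every cartesian closed category with a strong semimonad, for every interpretation of the base type).
   Context: Types: $A,B ::= \iota \mid 1 \mid A\times B \mid A\to B \mid \Diamond A$, where $\iota$ is a base type. A context $\Gamma$ is a list $x_1:A_1,\dots,x_n:A_n$ of distinct variables. Terms of the simply typed part: variables, $()$, $\langle t,u\rangle$, $\mathsf{fst}\,t$, $\mathsf{snd}\,t$, $\lambda x.t$, $t\,u$, with the standard typing rules. The calculus $\lambda^{SJ}$ adds: (letmap) if $\Gamma\vdash t:\Diamond A$ and $\Gamma,x:A\vdash u:B$ then $\Gamma\vdash \mathsf{letmap}\ x=t\ \mathsf{in}\ u:\Diamond B$; (let) if $\Gamma\vdash t:\Diamond A$ and $\Gamma,x:A\vdash u:\Diamond B$ then $\Gamma\vdash\mathsf{let}\ x=t\ \mathsf{in}\ u:\Diamond B$. Its equational theory $\equiv$ is the least congruence on well-typed terms containing the simply typed $\beta\eta$-laws ($t\equiv()$ for $t:1$; $t\equiv\langle\mathsf{fst}\,t,\mathsf{snd}\,t\rangle$; $\mathsf{fst}\langle t,u\rangle\equiv t$; $\mathsf{snd}\langle t,u\rangle\equiv u$; $t\equiv\lambda x.\,t\,x$ with $x$ fresh; $(\lambda x.t)\,u\equiv t[u/x]$) and: $t\equiv\mathsf{letmap}\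 x=t\ \mathsf{in}\ x$; $\mathsf{letmap}\ y=(\mathsf{letmap}\ x=t\ \mathsf{in}\ u)\ \mathsf{in}\ u'\equiv\mathsf{letmap}\ x=t\ \mathsf{in}\ u'[u/y]$; $\mathsf{let}\ y=(\mathsf{letmap}\ x=t\ \mathsf{in}\ u)\ \mathsf{in}\ u'\equiv\mathsf{let}\ x=t\ \mathsf{in}\ u'[u/y]$; $\mathsf{letmap}\ y=(\mathsf{let}\ x=t\ \mathsf{in}\ u)\ \mathsf{in}\ u'\equiv\mathsf{let}\ x=t\ \mathsf{in}\ (\mathsf{letmap}\ y=u\ \mathsf{in}\ u')$; $\mathsf{let}\ y=(\mathsf{let}\ x=t\ \mathsf{in}\ u)\ \mathsf{in}\ u'\equiv\mathsf{let}\ x=t\ \mathsf{in}\ (\mathsf{let}\ y=u\ \mathsf{in}\ u')$ (terms implicitly weakened where needed). A categorical model of $\lambda^{SJ}$ is a cartesian closed category $\mathcal C$ with an endofunctor $D$, a strength $\mathrm{st}_{X,Y}:X\times DY\to D(X\times Y)$ (natural, with $D\pi_2\circ\mathrm{st}_{1,X}=\pi_2$ and $D\alpha\circ\mathrm{st}_{X\times Y,Z}=\mathrm{st}_{X,Y\times Z}\circ(\mathrm{id}\times\mathrm{st}_{Y,Z})\circ\alpha$), and a natural transformation $\mu:DD\Rightarrow D$ that is associative ($\mu_X\circ\mu_{DX}=\mu_X\circ D\mu_X$) and strong ($\mu_{X\times Y}\circ D\mathrm{st}_{X,Y}\circ\mathrm{st}_{X,DY}=\mathrm{st}_{X,Y}\circ(\mathrm{id}_X\times\mu_Y)$).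 Given an object interpreting $\iota$, types/contexts/simply typed terms are interpreted in the standard cartesian closed way with $[\![\Diamond A]\!]=D[\![A]\!]$, $[\![\mathsf{letmap}\ x=t\ \mathsf{in}\ u]\!]=D[\![u]\!]\circ\mathrm{st}\circ\langle\mathrm{id},[\![t]\!]\rangle$ and $[\![\mathsf{let}\ x=t\ \mathsf{in}\ u]\!]=\mu\circ D[\![u]\!]\circ\mathrm{st}\circ\langle\mathrm{id},[\![t]\!]\rangle$. *)

theory Defs
  imports Main
begin

datatype ty = TyBase | TyUnit | TyProd ty ty | TyArr ty ty | TyDia ty

datatype tm =
    TVar nat | TUnit | TPair tm tm | TFst tm | TSnd tm
  | TLam ty tm | TApp tm tm
  | TLetmap tm tm   \<comment> \<open>letmap x = t in u ; x is bound (index 0) in u\<close>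
  | TLet tm tm      \<comment> \<open>let x = t in u ; x is bound (index 0) in u\<close>

fun lift :: "nat \<Rightarrow> tm \<Rightarrow> tm" where
  "lift k (TVar i) = (if i < k then TVar i else TVar (Suc i))"
| "lift k TUnit = TUnit"
| "lift k (TPair t u) = TPair (lift k t) (lift k u)"
| "lift k (TFst t) = TFst (lift k t)"
| "lift k (TSnd t) = TSnd (lift k t)"
| "lift k (TLam A t) = TLam A (lift (Suc k) t)"
| "lift k (TApp t u) = TApp (lift k t) (lift k u)"
| "lift k (TLetmap t u) = TLetmap (lift k t) (lift (Suc k) u)"
| "lift k (TLet t u) = TLet (lift k t) (lift (Suc k) u)"

fun subst :: "nat \<Rightarrow> tm \<Rightarrow> tm \<Rightarrow> tm" where
  "subst k s (TVar i) = (if i < k then TVar i else if i = k then s else TVar (i - 1))"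
| "subst k s TUnit = TUnit"
| "subst k s (TPair t u) = TPair (subst k s t) (subst k s u)"
| "subst k s (TFst t) = TFst (subst k s t)"
| "subst k s (TSnd t) = TSnd (subst k s t)"
| "subst k s (TLam A t) = TLam A (subst (Suc k) (lift 0 s) t)"
| "subst k s (TApp t u) = TApp (subst k s t) (subst k s u)"
| "subst k s (TLetmap t u) = TLetmap (subst k s t) (subst (Suc k) (lift 0 s) u)"
| "subst k s (TLet t u) = TLet (subst k s t) (subst (Suc k) (lift 0 s) u)"

text \<open>Contexts: lists of types; index 0 is the most recently bound variable,
  so the context Gamma, x:A is written A # Gamma.\<close>
inductive typing :: "ty list \<Rightarrow> tm \<Rightarrow> ty \<Rightarrow> bool" where
  ty_var: "i < length \<Gamma> \<Longrightarrow> typing \<Gamma> (TVar i) (\<Gamma> ! i)"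
| ty_unit: "typing \<Gamma> TUnit TyUnit"
| ty_pair: "typing \<Gamma> t A \<Longrightarrow> typing \<Gamma> u B \<Longrightarrow> typing \<Gamma> (TPair t u) (TyProd A B)"
| ty_fst: "typing \<Gamma> t (TyProd A B) \<Longrightarrow> typing \<Gamma> (TFst t) A"
| ty_snd: "typing \<Gamma> t (TyProd A B) \<Longrightarrow> typing \<Gamma> (TSnd t) B"
| ty_lam: "typing (A # \<Gamma>) t B \<Longrightarrow> typing \<Gamma> (TLam A t) (TyArr A B)"
| ty_app: "typing \<Gamma> t (TyArr A B) \<Longrightarrow> typing \<Gamma> u A \<Longrightarrow> typing \<Gamma> (TApp t u) B"
| ty_letmap: "typing \<Gamma> t (TyDia A) \<Longrightarrow> typing (A # \<Gamma>) u B \<Longrightarrow> typing \<Gamma> (TLetmap t u) (TyDia B)"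
| ty_let: "typing \<Gamma> t (TyDia A) \<Longrightarrow> typing (A # \<Gamma>) u (TyDia B) \<Longrightarrow> typing \<Gamma> (TLet t u) (TyDia B)"

inductive eqv :: "ty list \<Rightarrow> tm \<Rightarrow> tm \<Rightarrow> ty \<Rightarrow> bool" where
  eq_refl: "typing \<Gamma> t A \<Longrightarrow> eqv \<Gamma> t t A"
| eq_sym: "eqv \<Gamma> t u A \<Longrightarrow> eqv \<Gamma> u t A"
| eq_trans: "eqv \<Gamma> t u A \<Longrightarrow> eqv \<Gamma> u v A \<Longrightarrow> eqv \<Gamma> t v A"
| cg_pair: "eqv \<Gamma> t t' A \<Longrightarrow> eqv \<Gamma> u u' B \<Longrightarrow> eqv \<Gamma> (TPair t u) (TPair t' u') (TyProd A B)"
| cg_fst: "eqv \<Gamma> t t' (TyProd A B) \<Longrightarrow> eqv \<Gamma> (TFst t) (TFst t') A"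
| cg_snd: "eqv \<Gamma> t t' (TyProd A B) \<Longrightarrow> eqv \<Gamma> (TSnd t) (TSnd t') B"
| cg_lam: "eqv (A # \<Gamma>) t t' B \<Longrightarrow> eqv \<Gamma> (TLam A t) (TLam A t') (TyArr A B)"
| cg_app: "eqv \<Gamma> t t' (TyArr A B) \<Longrightarrow> eqv \<Gamma> u u' A \<Longrightarrow> eqv \<Gamma> (TApp t u) (TApp t' u') B"
| cg_letmap: "eqv \<Gamma> t t' (TyDia A) \<Longrightarrow> eqv (A # \<Gamma>) u u' B
    \<Longrightarrow> eqv \<Gamma> (TLetmap t u) (TLetmap t' u') (TyDia B)"
| cg_let: "eqv \<Gamma> t t' (TyDia A) \<Longrightarrow> eqv (A # \<Gamma>) u u' (TyDia B)
    \<Longrightarrow> eqv \<Gamma> (TLet t u) (TLet t' u') (TyDia B)"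
| ax_unit_eta: "typing \<Gamma> t TyUnit \<Longrightarrow> eqv \<Gamma> t TUnit TyUnit"
| ax_pair_eta: "typing \<Gamma> t (TyProd A B) \<Longrightarrow> eqv \<Gamma> t (TPair (TFst t) (TSnd t)) (TyProd A B)"
| ax_fst_beta: "typing \<Gamma> t A \<Longrightarrow> typing \<Gamma> u B \<Longrightarrow> eqv \<Gamma> (TFst (TPair t u)) t A"
| ax_snd_beta: "typing \<Gamma> t A \<Longrightarrow> typing \<Gamma> u B \<Longrightarrow> eqv \<Gamma> (TSnd (TPair t u)) u B"
| ax_fun_eta: "typing \<Gamma> t (TyArr A B) \<Longrightarrow>
    eqv \<Gamma> t (TLam A (TApp (lift 0 t) (TVar 0))) (TyArr A B)"
| ax_fun_beta: "typing (A # \<Gamma>) t B \<Longrightarrow> typing \<Gamma> u A \<Longrightarrow>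
    eqv \<Gamma> (TApp (TLam A t) u) (subst 0 u t) B"
| ax_letmap_id: "typing \<Gamma> t (TyDia A) \<Longrightarrow> eqv \<Gamma> t (TLetmap t (TVar 0)) (TyDia A)"
| ax_letmap_letmap: "typing \<Gamma> t (TyDia A) \<Longrightarrow> typing (A # \<Gamma>) u B \<Longrightarrow> typing (B # \<Gamma>) u' C \<Longrightarrow>
    eqv \<Gamma> (TLetmap (TLetmap t u) u') (TLetmap t (subst 0 u (lift 1 u'))) (TyDia C)"
| ax_let_letmap: "typing \<Gamma> t (TyDia A) \<Longrightarrow> typing (A # \<Gamma>) u B \<Longrightarrow> typing (B # \<Gamma>) u' (TyDia C) \<Longrightarrow>
    eqv \<Gamma> (TLet (TLetmap t u) u') (TLet t (subst 0 u (lift 1 u'))) (TyDia C)"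
| ax_letmap_let: "typing \<Gamma> t (TyDia A) \<Longrightarrow> typing (A # \<Gamma>) u (TyDia B) \<Longrightarrow> typing (B # \<Gamma>) u' C \<Longrightarrow>
    eqv \<Gamma> (TLetmap (TLet t u) u') (TLet t (TLetmap u (lift 1 u'))) (TyDia C)"
| ax_let_let: "typing \<Gamma> t (TyDia A) \<Longrightarrow> typing (A # \<Gamma>) u (TyDia B) \<Longrightarrow> typing (B # \<Gamma>) u' (TyDia C) \<Longrightarrow>
    eqv \<Gamma> (TLet (TLet t u) u') (TLet t (TLet u (lift 1 u'))) (TyDia C)"

text \<open>A category presented by objects, arrows, domain/codomain, identities and
  composition (cmp g f = g o f), with chosen terminal object, binary products,
  exponentials (expo X Y = Y^X, evl X Y : Y^X x X -> Y, cur Z X f : Z -> Y^X for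
  f : Z x X -> Y), an endofunctor D (Dob, Dar), a strength st and a multiplication mu.\<close>
record ('o, 'm) sj_model =
  Ob :: "'o set"
  Ar :: "'m set"
  sdom :: "'m \<Rightarrow> 'o"
  scod :: "'m \<Rightarrow> 'o"
  idm :: "'o \<Rightarrow> 'm"
  cmp :: "'m \<Rightarrow> 'm \<Rightarrow> 'm"
  trm :: "'o"
  bang :: "'o \<Rightarrow> 'm"
  prd :: "'o \<Rightarrow> 'o \<Rightarrow> 'o"
  pi1 :: "'o \<Rightarrow> 'o \<Rightarrow> 'm"
  pi2 :: "'o \<Rightarrow> 'o \<Rightarrow> 'm"
  tup :: "'m \<Rightarrow> 'm \<Rightarrow> 'm"
  expo :: "'o \<Rightarrow> 'o \<Rightarrow> 'o"
  evl :: "'o \<Rightarrow> 'o \<Rightarrow> 'm"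
  cur :: "'o \<Rightarrow> 'o \<Rightarrow> 'm \<Rightarrow> 'm"
  Dob :: "'o \<Rightarrow> 'o"
  Dar :: "'m \<Rightarrow> 'm"
  st :: "'o \<Rightarrow> 'o \<Rightarrow> 'm"
  mu :: "'o \<Rightarrow> 'm"

definition hom :: "('o, 'm) sj_model \<Rightarrow> 'o \<Rightarrow> 'o \<Rightarrow> 'm set" where
  "hom M A B = {f \<in> Ar M. sdom M f = A \<and> scod M f = B}"

definition parr :: "('o, 'm) sj_model \<Rightarrow> 'o \<Rightarrow> 'o \<Rightarrow> 'm \<Rightarrow> 'm \<Rightarrow> 'm" where
  "parr M A B f g = tup M (cmp M f (pi1 M A B)) (cmp M g (pi2 M A B))"

definition alpha :: "('o, 'm) sj_model \<Rightarrow> 'o \<Rightarrow> 'o \<Rightarrow> 'o \<Rightarrow> 'm" where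
  "alpha M X Y Z =
     tup M (cmp M (pi1 M X Y) (pi1 M (prd M X Y) Z))
           (tup M (cmp M (pi2 M X Y) (pi1 M (prd M X Y) Z)) (pi2 M (prd M X Y) Z))"

definition is_category :: "('o, 'm) sj_model \<Rightarrow> bool" where
  "is_category M \<longleftrightarrow>
     (\<forall>f\<in>Ar M. sdom M f \<in> Ob M \<and> scod M f \<in> Ob M) \<and>
     (\<forall>A\<in>Ob M. idm M A \<in> hom M A A) \<and>
     (\<forall>A B C f g. f \<in> hom M A B \<longrightarrow> g \<in> hom M B C \<longrightarrow> cmp M g f \<in> hom M A C) \<and>
     (\<forall>A B f. f \<in> hom M A B \<longrightarrow> cmp M f (idm M A) = f \<and> cmp M (idm M B) f = f) \<and>
     (\<forall>A B C D f g h. f \<in> hom M A B \<longrightarrow> g \<in> hom M B C \<longrightarrow> h \<in> hom M C D \<longrightarrow>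
        cmp M h (cmp M g f) = cmp M (cmp M h g) f)"

definition has_terminal :: "('o, 'm) sj_model \<Rightarrow> bool" where
  "has_terminal M \<longleftrightarrow> trm M \<in> Ob M \<and>
     (\<forall>A\<in>Ob M. bang M A \<in> hom M A (trm M) \<and> (\<forall>f\<in>hom M A (trm M). f = bang M A))"

definition has_products :: "('o, 'm) sj_model \<Rightarrow> bool" where
  "has_products M \<longleftrightarrow>
     (\<forall>A\<in>Ob M. \<forall>B\<in>Ob M.
        prd M A B \<in> Ob M \<and>
        pi1 M A B \<in> hom M (prd M A B) A \<and> pi2 M A B \<in> hom M (prd M A B) B \<and>
        (\<forall>C f g. f \<in> hom M C A \<longrightarrow> g \<in> hom M C B \<longrightarrow>
           tup M f g \<in> hom M C (prd M A B) \<and>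
           cmp M (pi1 M A B) (tup M f g) = f \<and> cmp M (pi2 M A B) (tup M f g) = g) \<and>
        (\<forall>C h. h \<in> hom M C (prd M A B) \<longrightarrow>
           h = tup M (cmp M (pi1 M A B) h) (cmp M (pi2 M A B) h)))"

definition has_exponentials :: "('o, 'm) sj_model \<Rightarrow> bool" where
  "has_exponentials M \<longleftrightarrow>
     (\<forall>X\<in>Ob M. \<forall>Y\<in>Ob M.
        expo M X Y \<in> Ob M \<and>
        evl M X Y \<in> hom M (prd M (expo M X Y) X) Y \<and>
        (\<forall>Z\<in>Ob M.
           (\<forall>f\<in>hom M (prd M Z X) Y.
              cur M Z X f \<in> hom M Z (expo M X Y) \<and>
              cmp M (evl M X Y) (parr M Z X (cur M Z X f) (idm M X)) = f) \<and>
           (\<forall>h\<in>hom M Z (expo M X Y).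
              cur M Z X (cmp M (evl M X Y) (parr M Z X h (idm M X))) = h)))"

definition is_endofunctor :: "('o, 'm) sj_model \<Rightarrow> bool" where
  "is_endofunctor M \<longleftrightarrow>
     (\<forall>A\<in>Ob M. Dob M A \<in> Ob M \<and> Dar M (idm M A) = idm M (Dob M A)) \<and>
     (\<forall>A B f. f \<in> hom M A B \<longrightarrow> Dar M f \<in> hom M (Dob M A) (Dob M B)) \<and>
     (\<forall>A B C f g. f \<in> hom M A B \<longrightarrow> g \<in> hom M B C \<longrightarrow>
        Dar M (cmp M g f) = cmp M (Dar M g) (Dar M f))"

definition is_strength :: "('o, 'm) sj_model \<Rightarrow> bool" where
  "is_strength M \<longleftrightarrow>
     (\<forall>X\<in>Ob M. \<forall>Y\<in>Ob M. st M X Y \<in> hom M (prd M X (Dob M Y)) (Dob M (prd M X Y))) \<and>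
     (\<forall>X X' Y Y' f g. f \<in> hom M X X' \<longrightarrow> g \<in> hom M Y Y' \<longrightarrow>
        cmp M (st M X' Y') (parr M X (Dob M Y) f (Dar M g))
        = cmp M (Dar M (parr M X Y f g)) (st M X Y)) \<and>
     (\<forall>X\<in>Ob M. cmp M (Dar M (pi2 M (trm M) X)) (st M (trm M) X) = pi2 M (trm M) (Dob M X)) \<and>
     (\<forall>X\<in>Ob M. \<forall>Y\<in>Ob M. \<forall>Z\<in>Ob M.
        cmp M (Dar M (alpha M X Y Z)) (st M (prd M X Y) Z)
        = cmp M (st M X (prd M Y Z))
            (cmp M (parr M X (prd M Y (Dob M Z)) (idm M X) (st M Y Z)) (alpha M X Y (Dob M Z))))"

definition is_strong_semimonad_mult :: "('o, 'm) sj_model \<Rightarrow> bool" where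
  "is_strong_semimonad_mult M \<longleftrightarrow>
     (\<forall>X\<in>Ob M. mu M X \<in> hom M (Dob M (Dob M X)) (Dob M X)) \<and>
     (\<forall>X Y f. f \<in> hom M X Y \<longrightarrow> cmp M (mu M Y) (Dar M (Dar M f)) = cmp M (Dar M f) (mu M X)) \<and>
     (\<forall>X\<in>Ob M. cmp M (mu M X) (mu M (Dob M X)) = cmp M (mu M X) (Dar M (mu M X))) \<and>
     (\<forall>X\<in>Ob M. \<forall>Y\<in>Ob M.
        cmp M (mu M (prd M X Y)) (cmp M (Dar M (st M X Y)) (st M X (Dob M Y)))
        = cmp M (st M X Y) (parr M X (Dob M (Dob M Y)) (idm M X) (mu M Y)))"

definition is_sj_model :: "('o, 'm) sj_model \<Rightarrow> bool" where
  "is_sj_model M \<longleftrightarrow> is_category M \<and> has_terminal M \<and> has_products M \<and>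
     has_exponentials M \<and> is_endofunctor M \<and> is_strength M \<and> is_strong_semimonad_mult M"

fun ty_obj :: "('o, 'm) sj_model \<Rightarrow> 'o \<Rightarrow> ty \<Rightarrow> 'o" where
  "ty_obj M \<iota> TyBase = \<iota>"
| "ty_obj M \<iota> TyUnit = trm M"
| "ty_obj M \<iota> (TyProd A B) = prd M (ty_obj M \<iota> A) (ty_obj M \<iota> B)"
| "ty_obj M \<iota> (TyArr A B) = expo M (ty_obj M \<iota> A) (ty_obj M \<iota> B)"
| "ty_obj M \<iota> (TyDia A) = Dob M (ty_obj M \<iota> A)"

fun ctx_obj :: "('o, 'm) sj_model \<Rightarrow> 'o \<Rightarrow> ty list \<Rightarrow> 'o" where
  "ctx_obj M \<iota> [] = trm M"
| "ctx_obj M \<iota> (A # \<Gamma>) = prd M (ctx_obj M \<iota> \<Gamma>) (ty_obj M \<iota> A)"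

fun var_sem :: "('o, 'm) sj_model \<Rightarrow> 'o \<Rightarrow> ty list \<Rightarrow> nat \<Rightarrow> 'm" where
  "var_sem M \<iota> (A # \<Gamma>) 0 = pi2 M (ctx_obj M \<iota> \<Gamma>) (ty_obj M \<iota> A)"
| "var_sem M \<iota> (A # \<Gamma>) (Suc i) = cmp M (var_sem M \<iota> \<Gamma> i) (pi1 M (ctx_obj M \<iota> \<Gamma>) (ty_obj M \<iota> A))"
| "var_sem M \<iota> [] i = undefined"

definition tyof :: "ty list \<Rightarrow> tm \<Rightarrow> ty" where
  "tyof \<Gamma> t = (THE A. typing \<Gamma> t A)"

fun prod_l :: "ty \<Rightarrow> ty" where "prod_l (TyProd A B) = A"
fun prod_r :: "ty \<Rightarrow> ty" where "prod_r (TyProd A B) = B"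
fun arr_dom :: "ty \<Rightarrow> ty" where "arr_dom (TyArr A B) = A"
fun arr_cod :: "ty \<Rightarrow> ty" where "arr_cod (TyArr A B) = B"
fun dia_arg :: "ty \<Rightarrow> ty" where "dia_arg (TyDia A) = A"

fun sem :: "('o, 'm) sj_model \<Rightarrow> 'o \<Rightarrow> ty list \<Rightarrow> tm \<Rightarrow> 'm" where
  "sem M \<iota> \<Gamma> (TVar i) = var_sem M \<iota> \<Gamma> i"
| "sem M \<iota> \<Gamma> TUnit = bang M (ctx_obj M \<iota> \<Gamma>)"
| "sem M \<iota> \<Gamma> (TPair t u) = tup M (sem M \<iota> \<Gamma> t) (sem M \<iota> \<Gamma> u)"
| "sem M \<iota> \<Gamma> (TFst t) =
     cmp M (pi1 M (ty_obj M \<iota> (prod_l (tyof \<Gamma> t))) (ty_obj M \<iota> (prod_r (tyof \<Gamma> t)))) (sem M \<iota> \<Gamma> t)"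
| "sem M \<iota> \<Gamma> (TSnd t) =
     cmp M (pi2 M (ty_obj M \<iota> (prod_l (tyof \<Gamma> t))) (ty_obj M \<iota> (prod_r (tyof \<Gamma> t)))) (sem M \<iota> \<Gamma> t)"
| "sem M \<iota> \<Gamma> (TLam A t) = cur M (ctx_obj M \<iota> \<Gamma>) (ty_obj M \<iota> A) (sem M \<iota> (A # \<Gamma>) t)"
| "sem M \<iota> \<Gamma> (TApp t u) =
     cmp M (evl M (ty_obj M \<iota> (arr_dom (tyof \<Gamma> t))) (ty_obj M \<iota> (arr_cod (tyof \<Gamma> t))))
       (tup M (sem M \<iota> \<Gamma> t) (sem M \<iota> \<Gamma> u))"
| "sem M \<iota> \<Gamma> (TLetmap t u) =
     (let A = dia_arg (tyof \<Gamma> t) in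
      cmp M (Dar M (sem M \<iota> (A # \<Gamma>) u))
        (cmp M (st M (ctx_obj M \<iota> \<Gamma>) (ty_obj M \<iota> A))
           (tup M (idm M (ctx_obj M \<iota> \<Gamma>)) (sem M \<iota> \<Gamma> t))))"
| "sem M \<iota> \<Gamma> (TLet t u) =
     (let A = dia_arg (tyof \<Gamma> t); B = dia_arg (tyof (A # \<Gamma>) u) in
      cmp M (mu M (ty_obj M \<iota> B))
        (cmp M (Dar M (sem M \<iota> (A # \<Gamma>) u))
          (cmp M (st M (ctx_obj M \<iota> \<Gamma>) (ty_obj M \<iota> A))
             (tup M (idm M (ctx_obj M \<iota> \<Gamma>)) (sem M \<iota> \<Gamma> t)))))"

end

theory Submission
  imports Defs "HOL-Library.Countable"
begin

inductive_cases tyVarE: "typing G (TVar i) A"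
inductive_cases tyUnitE: "typing G TUnit A"
inductive_cases tyPairE: "typing G (TPair t u) A"
inductive_cases tyFstE: "typing G (TFst t) A"
inductive_cases tySndE: "typing G (TSnd t) A"
inductive_cases tyLamE: "typing G (TLam B t) A"
inductive_cases tyAppE: "typing G (TApp t u) A"
inductive_cases tyLetmapE: "typing G (TLetmap t u) A"
inductive_cases tyLetE: "typing G (TLet t u) A"

lemma typing_unique: "typing G t A \<Longrightarrow> typing G t B \<Longrightarrow> A = B"
proof (induction arbitrary: B rule: typing.induct)
  case (ty_var i \<Gamma>) then show ?case by (auto elim: tyVarE)
next
  case (ty_unit \<Gamma>) then show ?case by (auto elim: tyUnitE)
next
  case (ty_pair \<Gamma> t A u B) then show ?case by (blast elim: tyPairE)
next
  case (ty_fst \<Gamma> t A B) then show ?case by (blast elim: tyFstE)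
next
  case (ty_snd \<Gamma> t A B) then show ?case by (blast elim: tySndE)
next
  case (ty_lam A \<Gamma> t B) then show ?case by (blast elim: tyLamE)
next
  case (ty_app \<Gamma> t A B u) then show ?case by (blast elim: tyAppE)
next
  case (ty_letmap \<Gamma> t A u B) then show ?case by (blast elim: tyLetmapE)
next
  case (ty_let \<Gamma> t A u B) then show ?case by (blast elim: tyLetE)
qed

lemma tyof_eq: "typing G t A \<Longrightarrow> tyof G t = A"
  unfolding tyof_def using typing_unique by blast

definition upr :: "(nat \<Rightarrow> nat) \<Rightarrow> nat \<Rightarrow> nat" where
  "upr r i = (case i of 0 \<Rightarrow> 0 | Suc j \<Rightarrow> Suc (r j))"

fun ren :: "(nat \<Rightarrow> nat) \<Rightarrow> tm \<Rightarrow> tm" where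
  "ren r (TVar i) = TVar (r i)"
| "ren r TUnit = TUnit"
| "ren r (TPair t u) = TPair (ren r t) (ren r u)"
| "ren r (TFst t) = TFst (ren r t)"
| "ren r (TSnd t) = TSnd (ren r t)"
| "ren r (TLam A t) = TLam A (ren (upr r) t)"
| "ren r (TApp t u) = TApp (ren r t) (ren r u)"
| "ren r (TLetmap t u) = TLetmap (ren r t) (ren (upr r) u)"
| "ren r (TLet t u) = TLet (ren r t) (ren (upr r) u)"

definition shs :: "(nat \<Rightarrow> tm) \<Rightarrow> nat \<Rightarrow> tm" where
  "shs s i = (case i of 0 \<Rightarrow> TVar 0 | Suc j \<Rightarrow> ren Suc (s j))"

fun msubst :: "(nat \<Rightarrow> tm) \<Rightarrow> tm \<Rightarrow> tm" where
  "msubst s (TVar i) = s i"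
| "msubst s TUnit = TUnit"
| "msubst s (TPair t u) = TPair (msubst s t) (msubst s u)"
| "msubst s (TFst t) = TFst (msubst s t)"
| "msubst s (TSnd t) = TSnd (msubst s t)"
| "msubst s (TLam A t) = TLam A (msubst (shs s) t)"
| "msubst s (TApp t u) = TApp (msubst s t) (msubst s u)"
| "msubst s (TLetmap t u) = TLetmap (msubst s t) (msubst (shs s) u)"
| "msubst s (TLet t u) = TLet (msubst s t) (msubst (shs s) u)"

lemma upr_0[simp]: "upr r 0 = 0" and upr_Suc[simp]: "upr r (Suc j) = Suc (r j)"
  by (simp_all add: upr_def)
lemma shs_0[simp]: "shs s 0 = TVar 0" and shs_Suc[simp]: "shs s (Suc j) = ren Suc (s j)"
  by (simp_all add: shs_def)

lemma upr_comp: "upr (r \<circ> r') = upr r \<circ> upr r'"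
  by (auto simp: upr_def fun_eq_iff split: nat.split)

lemma ren_ren: "ren r (ren r' t) = ren (r \<circ> r') t"
  by (induction t arbitrary: r r') (simp_all add: upr_comp)

lemma shs_comp_upr: "shs (s \<circ> r) = shs s \<circ> upr r"
  by (auto simp: shs_def upr_def fun_eq_iff split: nat.split)

lemma msubst_ren: "msubst s (ren r t) = msubst (s \<circ> r) t"
  by (induction t arbitrary: s r) (simp_all add: shs_comp_upr)

lemma upr_Suc_comp: "upr r \<circ> Suc = Suc \<circ> r"
  by (auto simp: fun_eq_iff)

lemma ren_upr_shs: "ren (upr r) \<circ> shs s = shs (ren r \<circ> s)"
  by (auto simp: fun_eq_iff shs_def ren_ren upr_Suc_comp split: nat.split)

lemma ren_msubst: "ren r (msubst s t) = msubst (ren r \<circ> s) t"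
  by (induction t arbitrary: s r) (simp_all add: ren_upr_shs)

lemma shs_msubst: "shs (\<lambda>i. msubst s (t i)) = (\<lambda>i. msubst (shs s) (shs t i))"
proof -
  have "shs s \<circ> Suc = ren Suc \<circ> s" by (auto simp: fun_eq_iff)
  then show ?thesis
    by (auto simp: fun_eq_iff shs_def msubst_ren ren_msubst comp_def split: nat.split)
qed

lemma msubst_msubst: "msubst s (msubst t u) = msubst (\<lambda>i. msubst s (t i)) u"
  by (induction u arbitrary: s t) (simp_all add: shs_msubst)

lemma shs_TVar: "shs TVar = TVar"
  by (auto simp: fun_eq_iff shs_def split: nat.split)

lemma msubst_TVar[simp]: "msubst TVar t = t"
  by (induction t) (simp_all add: shs_TVar)

lemma shs_TVar_comp: "shs (TVar \<circ> r) = TVar \<circ> upr r"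
  by (auto simp: fun_eq_iff shs_def split: nat.split)

lemma ren_as_msubst: "ren r t = msubst (TVar \<circ> r) t"
  by (induction t arbitrary: r) (simp_all add: shs_TVar_comp)

definition liftr :: "nat \<Rightarrow> nat \<Rightarrow> nat" where
  "liftr k i = (if i < k then i else Suc i)"

lemma upr_liftr: "upr (liftr k) = liftr (Suc k)"
  by (auto simp: fun_eq_iff liftr_def upr_def split: nat.split)

lemma lift_ren: "lift k t = ren (liftr k) t"
  by (induction t arbitrary: k) (simp_all add: upr_liftr liftr_def)

lemma liftr0: "liftr 0 = Suc" by (simp add: fun_eq_iff liftr_def)

definition substf :: "nat \<Rightarrow> tm \<Rightarrow> nat \<Rightarrow> tm" where
  "substf k s i = (if i < k then TVar i else if i = k then s else TVar (i - 1))"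

lemma shs_substf: "shs (substf k s) = substf (Suc k) (lift 0 s)"
  by (auto simp: fun_eq_iff substf_def shs_def lift_ren liftr0 split: nat.split)

lemma subst_msubst: "subst k s t = msubst (substf k s) t"
  by (induction t arbitrary: k s) (simp_all add: shs_substf substf_def)

lemma typing_ren:
  "typing D t A \<Longrightarrow> (\<forall>i<length D. r i < length G \<and> G ! r i = D ! i) \<Longrightarrow> typing G (ren r t) A"
proof (induction arbitrary: G r rule: typing.induct)
  case (ty_var i \<Gamma>) then show ?case by (metis ren.simps(1) typing.ty_var)
next
  case (ty_lam A \<Gamma> t B)
  have "\<forall>i<length (A#\<Gamma>). upr r i < length (A#G) \<and> (A#G) ! upr r i = (A#\<Gamma>) ! i"
    using ty_lam.prems by (auto simp: upr_def split: nat.split)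
  then show ?case using ty_lam ty_lam.IH[where G="A#G" and r="upr r"] by (auto intro: typing.intros)
next
  case (ty_letmap \<Gamma> t A u B)
  have "\<forall>i<length (A#\<Gamma>). upr r i < length (A#G) \<and> (A#G) ! upr r i = (A#\<Gamma>) ! i"
    using ty_letmap.prems by (auto simp: upr_def split: nat.split)
  then have "typing (A#G) (ren (upr r) u) B" by (rule ty_letmap.IH(2))
  then show ?case using ty_letmap.IH(1)[OF ty_letmap.prems] by (simp add: typing.ty_letmap)
next
  case (ty_let \<Gamma> t A u B)
  have "\<forall>i<length (A#\<Gamma>). upr r i < length (A#G) \<and> (A#G) ! upr r i = (A#\<Gamma>) ! i"
    using ty_let.prems by (auto simp: upr_def split: nat.split)
  then have "typing (A#G) (ren (upr r) u) (TyDia B)" by (rule ty_let.IH(2))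
  then show ?case using ty_let.IH(1)[OF ty_let.prems] by (simp add: typing.ty_let)
qed (simp; blast intro: typing.intros)+

lemma typing_wk: "typing G t A \<Longrightarrow> typing (B#G) (ren Suc t) A"
  by (erule typing_ren) auto

lemma typing_var0: "typing (C#G) (TVar 0) C"
  using typing.ty_var[of 0 "C#G"] by simp

lemma typing_varS: "i < length G \<Longrightarrow> typing (C#G) (TVar (Suc i)) (G ! i)"
  using typing.ty_var[of "Suc i" "C#G"] by simp

lemma shs_typed:
  "\<forall>i<length D. typing G (s i) (D ! i) \<Longrightarrow> \<forall>i<length (C#D). typing (C#G) (shs s i) ((C#D) ! i)"
  by (auto simp: shs_def typing_wk typing_var0 split: nat.split)

lemma typing_msubst:
  "typing D t A \<Longrightarrow> (\<forall>i<length D. typing G (s i) (D ! i)) \<Longrightarrow> typing G (msubst s t) A"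
proof (induction arbitrary: G s rule: typing.induct)
  case (ty_lam A \<Gamma> t B)
  then show ?case using ty_lam.IH[OF shs_typed[OF ty_lam.prems, of A]] by (auto intro: typing.intros)
next
  case (ty_letmap \<Gamma> t A u B)
  then show ?case using ty_letmap.IH(2)[OF shs_typed[OF ty_letmap.prems, of A]] by (auto intro: typing.intros)
next
  case (ty_let \<Gamma> t A u B)
  then show ?case using ty_let.IH(2)[OF shs_typed[OF ty_let.prems, of A]] by (auto intro: typing.intros)
qed (simp; blast intro: typing.intros)+

lemma typing_lift0: "typing G t A \<Longrightarrow> typing (B#G) (lift 0 t) A"
  by (simp add: lift_ren liftr0 typing_wk)

lemma typing_lift1: "typing (B#G) t A \<Longrightarrow> typing (B#C#G) (lift 1 t) A"
  unfolding lift_ren by (erule typing_ren) (auto simp: liftr_def nth_Cons split: nat.split)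

lemma typing_lift1': "typing (B#G) t A \<Longrightarrow> typing (B#C#G) (lift (Suc 0) t) A"
  using typing_lift1 by simp

lemma typing_subst0: "typing (B#G) t A \<Longrightarrow> typing G s B \<Longrightarrow> typing G (subst 0 s t) A"
  unfolding subst_msubst by (erule typing_msubst) (auto simp: substf_def nth_Cons intro: typing.intros split: nat.split)

lemma eqv_typing: "eqv G t u A \<Longrightarrow> typing G t A \<and> typing G u A"
  by (induction rule: eqv.induct)
     (blast intro: typing.intros typing_var0 typing_lift0 typing_lift1 typing_lift1' typing_subst0)+

lemma C1: "msubst (shs s) (lift 0 t) = lift 0 (msubst s t)"
  by (simp add: lift_ren liftr0 msubst_ren ren_msubst comp_def)

lemma substf0_Suc: "(\<lambda>x. substf 0 u (Suc x)) = TVar"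
  by (simp add: fun_eq_iff substf_def)

lemma C2: "msubst s (subst 0 u t) = subst 0 (msubst s u) (msubst (shs s) t)"
proof -
  have "(\<lambda>i. msubst s (substf 0 u i)) = (\<lambda>i. msubst (substf 0 (msubst s u)) (shs s i))"
  proof (rule ext)
    fix i show "msubst s (substf 0 u i) = msubst (substf 0 (msubst s u)) (shs s i)"
      by (cases i) (simp_all add: msubst_ren comp_def substf0_Suc substf_def)
  qed
  then show ?thesis by (simp add: subst_msubst msubst_msubst)
qed

lemma C3: "msubst (shs (shs s)) (lift 1 u) = lift 1 (msubst (shs s) u)"
proof -
  have "(\<lambda>i. shs (shs s) (liftr 1 i)) = (\<lambda>i. ren (liftr 1) (shs s i))"
  proof (rule ext)
    fix i show "shs (shs s) (liftr 1 i) = ren (liftr 1) (shs s i)"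
      by (cases i) (simp_all add: liftr_def ren_ren comp_def)
  qed
  then show ?thesis by (simp add: lift_ren msubst_ren ren_msubst comp_def)
qed

lemma C3': "msubst (shs (shs s)) (lift (Suc 0) u) = lift (Suc 0) (msubst (shs s) u)"
  using C3 by simp

lemma eqv_msubst:
  "eqv D t t' A \<Longrightarrow> \<forall>i<length D. typing G (s i) (D ! i) \<Longrightarrow> eqv G (msubst s t) (msubst s t') A"
proof (induction arbitrary: G s rule: eqv.induct)
  case (eq_refl \<Gamma> t A) then show ?case by (simp add: eqv.eq_refl typing_msubst)
next
  case (eq_sym \<Gamma> t u A) then show ?case by (simp add: eqv.eq_sym)
next
  case (eq_trans \<Gamma> t u A v) then show ?case by (meson eqv.eq_trans)
next
  case (cg_pair \<Gamma> t t' A u u' B) then show ?case by (simp add: eqv.cg_pair)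
next
  case (cg_fst \<Gamma> t t' A B) then show ?case by (simp, meson eqv.cg_fst)
next
  case (cg_snd \<Gamma> t t' A B) then show ?case by (simp, meson eqv.cg_snd)
next
  case (cg_lam A \<Gamma> t t' B) then show ?case using cg_lam.IH[OF shs_typed[OF cg_lam.prems]] by (simp add: eqv.cg_lam)
next
  case (cg_app \<Gamma> t t' A B u u') then show ?case by (simp, meson eqv.cg_app)
next
  case (cg_letmap \<Gamma> t t' A u u' B) show ?case
    unfolding msubst.simps by (rule eqv.cg_letmap[OF cg_letmap.IH(1)[OF cg_letmap.prems] cg_letmap.IH(2)[OF shs_typed[OF cg_letmap.prems]]])
next
  case (cg_let \<Gamma> t t' A u u' B) show ?case
    unfolding msubst.simps by (rule eqv.cg_let[OF cg_let.IH(1)[OF cg_let.prems] cg_let.IH(2)[OF shs_typed[OF cg_let.prems]]])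
next
  case (ax_unit_eta \<Gamma> t) then show ?case by (simp add: eqv.ax_unit_eta typing_msubst)
next
  case (ax_pair_eta \<Gamma> t A B) then show ?case by (simp add: eqv.ax_pair_eta typing_msubst)
next
  case (ax_fst_beta \<Gamma> t A u B) then show ?case by (simp, meson eqv.ax_fst_beta typing_msubst)
next
  case (ax_snd_beta \<Gamma> t A u B) then show ?case by (simp, meson eqv.ax_snd_beta typing_msubst)
next
  case (ax_fun_eta \<Gamma> t A B) then show ?case by (simp add: C1 eqv.ax_fun_eta typing_msubst)
next
  case (ax_fun_beta A \<Gamma> t B u) then show ?case
    using typing_msubst[OF ax_fun_beta(1) shs_typed[OF ax_fun_beta.prems]]
    by (simp add: C2 eqv.ax_fun_beta typing_msubst)
next
  case (ax_letmap_id \<Gamma> t A) then show ?case by (simp add: eqv.ax_letmap_id typing_msubst)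
next
  case (ax_letmap_letmap \<Gamma> t A u B u' C)
  note T = typing_msubst[OF ax_letmap_letmap(1) ax_letmap_letmap.prems]
    typing_msubst[OF ax_letmap_letmap(2) shs_typed[OF ax_letmap_letmap.prems]]
    typing_msubst[OF ax_letmap_letmap(3) shs_typed[OF ax_letmap_letmap.prems]]
  have "eqv G (TLetmap (TLetmap (msubst s t) (msubst (shs s) u)) (msubst (shs s) u'))
     (TLetmap (msubst s t) (subst 0 (msubst (shs s) u) (lift 1 (msubst (shs s) u')))) (TyDia C)"
    by (rule eqv.ax_letmap_letmap[OF T])
  then show ?case by (simp add: C2 C3')
next
  case (ax_let_letmap \<Gamma> t A u B u' C)
  note T = typing_msubst[OF ax_let_letmap(1) ax_let_letmap.prems]
    typing_msubst[OF ax_let_letmap(2) shs_typed[OF ax_let_letmap.prems]]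
    typing_msubst[OF ax_let_letmap(3) shs_typed[OF ax_let_letmap.prems]]
  have "eqv G (TLet (TLetmap (msubst s t) (msubst (shs s) u)) (msubst (shs s) u'))
     (TLet (msubst s t) (subst 0 (msubst (shs s) u) (lift 1 (msubst (shs s) u')))) (TyDia C)"
    by (rule eqv.ax_let_letmap[OF T])
  then show ?case by (simp add: C2 C3')
next
  case (ax_letmap_let \<Gamma> t A u B u' C)
  note T = typing_msubst[OF ax_letmap_let(1) ax_letmap_let.prems]
    typing_msubst[OF ax_letmap_let(2) shs_typed[OF ax_letmap_let.prems]]
    typing_msubst[OF ax_letmap_let(3) shs_typed[OF ax_letmap_let.prems]]
  have "eqv G (TLetmap (TLet (msubst s t) (msubst (shs s) u)) (msubst (shs s) u'))
     (TLet (msubst s t) (TLetmap (msubst (shs s) u) (lift 1 (msubst (shs s) u')))) (TyDia C)"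
    by (rule eqv.ax_letmap_let[OF T])
  then show ?case by (simp add: C3')
next
  case (ax_let_let \<Gamma> t A u B u' C)
  note T = typing_msubst[OF ax_let_let(1) ax_let_let.prems]
    typing_msubst[OF ax_let_let(2) shs_typed[OF ax_let_let.prems]]
    typing_msubst[OF ax_let_let(3) shs_typed[OF ax_let_let.prems]]
  have "eqv G (TLet (TLet (msubst s t) (msubst (shs s) u)) (msubst (shs s) u'))
     (TLet (msubst s t) (TLet (msubst (shs s) u) (lift 1 (msubst (shs s) u')))) (TyDia C)"
    by (rule eqv.ax_let_let[OF T])
  then show ?case by (simp add: C3')
qed

lemma eqv_refl: "typing G t A \<Longrightarrow> eqv G t t A" by (rule eq_refl)

lemma eqv_wk: "eqv G t t' A \<Longrightarrow> eqv (C#G) (ren Suc t) (ren Suc t') A"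
  unfolding ren_as_msubst by (erule eqv_msubst) (simp add: typing_varS)

lemma shs_eqv:
  "\<forall>i<length D. eqv G (s i) (s' i) (D ! i) \<Longrightarrow> \<forall>i<length (C#D). eqv (C#G) (shs s i) (shs s' i) ((C#D) ! i)"
  by (auto simp: shs_def eqv_wk typing_var0 eqv_refl split: nat.split)

lemma eqv_msubst_pw:
  "typing D t A \<Longrightarrow> \<forall>i<length D. eqv G (s i) (s' i) (D ! i) \<Longrightarrow> eqv G (msubst s t) (msubst s' t) A"
proof (induction arbitrary: G s s' rule: typing.induct)
  case (ty_var i \<Gamma>) then show ?case by simp
next
  case (ty_unit \<Gamma>) then show ?case by (simp add: eqv_refl typing.ty_unit)
next
  case (ty_pair \<Gamma> t A u B) then show ?case by (simp add: cg_pair)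
next
  case (ty_fst \<Gamma> t A B) then show ?case by (simp, meson cg_fst)
next
  case (ty_snd \<Gamma> t A B) then show ?case by (simp, meson cg_snd)
next
  case (ty_lam A \<Gamma> t B) then show ?case using ty_lam.IH[OF shs_eqv[OF ty_lam.prems]] by (simp add: cg_lam)
next
  case (ty_app \<Gamma> t A B u) then show ?case by (simp, meson cg_app)
next
  case (ty_letmap \<Gamma> t A u B) show ?case
    unfolding msubst.simps by (rule cg_letmap[OF ty_letmap.IH(1)[OF ty_letmap.prems] ty_letmap.IH(2)[OF shs_eqv[OF ty_letmap.prems]]])
next
  case (ty_let \<Gamma> t A u B) show ?case
    unfolding msubst.simps by (rule cg_let[OF ty_let.IH(1)[OF ty_let.prems] ty_let.IH(2)[OF shs_eqv[OF ty_let.prems]]])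
qed

lemma eqv_msubst2:
  assumes "eqv D t t' A" "\<forall>i<length D. eqv G (s i) (s' i) (D ! i)"
  shows "eqv G (msubst s t) (msubst s' t') A"
proof -
  have "\<forall>i<length D. typing G (s i) (D ! i)" using assms(2) eqv_typing by blast
  then have "eqv G (msubst s t) (msubst s t') A" using assms(1) eqv_msubst by blast
  moreover have "eqv G (msubst s t') (msubst s' t') A"
    using eqv_msubst_pw assms eqv_typing by blast
  ultimately show ?thesis by (rule eq_trans)
qed

locale sjm = fixes M :: "('o, 'm) sj_model" assumes M: "is_sj_model M"
begin

lemma cat: "is_category M" and terml: "has_terminal M" and prods: "has_products M"
  and expos: "has_exponentials M" and func: "is_endofunctor M" and stren: "is_strength M"
  and mult: "is_strong_semimonad_mult M"
  using M by (simp_all add: is_sj_model_def)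

lemma ar_ob[simp]: "f \<in> Ar M \<Longrightarrow> sdom M f \<in> Ob M" "f \<in> Ar M \<Longrightarrow> scod M f \<in> Ob M"
  using cat by (auto simp: is_category_def)

lemma id_ar[simp]: "A \<in> Ob M \<Longrightarrow> idm M A \<in> Ar M" "A \<in> Ob M \<Longrightarrow> sdom M (idm M A) = A"
   "A \<in> Ob M \<Longrightarrow> scod M (idm M A) = A"
  using cat by (auto simp: is_category_def hom_def)

lemma cmp_ar[simp]:
  assumes "f \<in> Ar M" "g \<in> Ar M" "sdom M g = scod M f"
  shows "cmp M g f \<in> Ar M" "sdom M (cmp M g f) = sdom M f" "scod M (cmp M g f) = scod M g"
proof -
  have "f \<in> hom M (sdom M f) (scod M f)" "g \<in> hom M (scod M f) (scod M g)" using assms by (auto simp: hom_def)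
  then have "cmp M g f \<in> hom M (sdom M f) (scod M g)" using cat unfolding is_category_def by blast
  then show "cmp M g f \<in> Ar M" "sdom M (cmp M g f) = sdom M f" "scod M (cmp M g f) = scod M g"
    by (auto simp: hom_def)
qed

lemma id_left[simp]: "f \<in> Ar M \<Longrightarrow> scod M f = B \<Longrightarrow> cmp M (idm M B) f = f"
  and id_right[simp]: "f \<in> Ar M \<Longrightarrow> sdom M f = A \<Longrightarrow> cmp M f (idm M A) = f"
  using cat unfolding is_category_def hom_def by blast+

lemma assoc[simp]:
  assumes "f \<in> Ar M" "g \<in> Ar M" "h \<in> Ar M" "sdom M g = scod M f" "sdom M h = scod M g"
  shows "cmp M (cmp M h g) f = cmp M h (cmp M g f)"
proof -
  have "f \<in> hom M (sdom M f) (scod M f)" "g \<in> hom M (scod M f) (scod M g)"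
    "h \<in> hom M (scod M g) (scod M h)" using assms by (auto simp: hom_def)
  then show ?thesis using cat unfolding is_category_def by metis
qed

lemma trm_ob[simp]: "trm M \<in> Ob M" using terml by (simp add: has_terminal_def)

lemma bang_ar[simp]: "A \<in> Ob M \<Longrightarrow> bang M A \<in> Ar M" "A \<in> Ob M \<Longrightarrow> sdom M (bang M A) = A"
  "A \<in> Ob M \<Longrightarrow> scod M (bang M A) = trm M"
  using terml by (auto simp: has_terminal_def hom_def)

lemma bang_uniq: "f \<in> Ar M \<Longrightarrow> scod M f = trm M \<Longrightarrow> sdom M f = A \<Longrightarrow> f = bang M A"
  using terml by (auto simp: has_terminal_def hom_def)

lemma prd_ob[simp]: "A \<in> Ob M \<Longrightarrow> B \<in> Ob M \<Longrightarrow> prd M A B \<in> Ob M"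
  using prods by (simp add: has_products_def)

lemma pi_ar[simp]:
  assumes "A \<in> Ob M" "B \<in> Ob M"
  shows "pi1 M A B \<in> Ar M" "sdom M (pi1 M A B) = prd M A B" "scod M (pi1 M A B) = A"
   "pi2 M A B \<in> Ar M" "sdom M (pi2 M A B) = prd M A B" "scod M (pi2 M A B) = B"
  using prods assms by (auto simp: has_products_def hom_def)

lemma tup_ar[simp]:
  assumes "f \<in> Ar M" "g \<in> Ar M" "sdom M f = sdom M g"
  shows "tup M f g \<in> Ar M" "sdom M (tup M f g) = sdom M f" "scod M (tup M f g) = prd M (scod M f) (scod M g)"
proof -
  have "f \<in> hom M (sdom M f) (scod M f)" "g \<in> hom M (sdom M f) (scod M g)" using assms by (auto simp: hom_def)
  then have "tup M f g \<in> hom M (sdom M f) (prd M (scod M f) (scod M g))"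
    using prods assms unfolding has_products_def by simp
  then show "tup M f g \<in> Ar M" "sdom M (tup M f g) = sdom M f" "scod M (tup M f g) = prd M (scod M f) (scod M g)"
    by (auto simp: hom_def)
qed

lemma pi_tup[simp]:
  assumes "f \<in> Ar M" "g \<in> Ar M" "sdom M f = sdom M g" "scod M f = A" "scod M g = B"
  shows "cmp M (pi1 M A B) (tup M f g) = f" "cmp M (pi2 M A B) (tup M f g) = g"
proof -
  have "f \<in> hom M (sdom M f) A" "g \<in> hom M (sdom M f) B" using assms by (auto simp: hom_def)
  then show "cmp M (pi1 M A B) (tup M f g) = f" "cmp M (pi2 M A B) (tup M f g) = g"
    using prods assms unfolding has_products_def by auto
qed

lemma tup_eta:
  assumes "h \<in> Ar M" "scod M h = prd M A B" "A \<in> Ob M" "B \<in> Ob M"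
  shows "tup M (cmp M (pi1 M A B) h) (cmp M (pi2 M A B) h) = h"
proof -
  have "h \<in> hom M (sdom M h) (prd M A B)" using assms by (auto simp: hom_def)
  then show ?thesis using prods assms unfolding has_products_def by metis
qed

lemma pi_tup_k[simp]:
  assumes "f \<in> Ar M" "g \<in> Ar M" "sdom M f = sdom M g" "scod M f = A" "scod M g = B"
    "k \<in> Ar M" "scod M k = sdom M f"
  shows "cmp M (pi1 M A B) (cmp M (tup M f g) k) = cmp M f k"
    "cmp M (pi2 M A B) (cmp M (tup M f g) k) = cmp M g k"
proof -
  have AB: "A \<in> Ob M" "B \<in> Ob M" using assms ar_ob by blast+
  show "cmp M (pi1 M A B) (cmp M (tup M f g) k) = cmp M f k"
    using assms AB assoc[of k "tup M f g" "pi1 M A B"] by simp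
  show "cmp M (pi2 M A B) (cmp M (tup M f g) k) = cmp M g k"
    using assms AB assoc[of k "tup M f g" "pi2 M A B"] by simp
qed

lemma tup_comp:
  assumes "f \<in> Ar M" "g \<in> Ar M" "sdom M f = sdom M g" "k \<in> Ar M" "scod M k = sdom M f"
  shows "cmp M (tup M f g) k = tup M (cmp M f k) (cmp M g k)"
proof -
  let ?A = "scod M f" and ?B = "scod M g"
  have "tup M (cmp M (pi1 M ?A ?B) (cmp M (tup M f g) k)) (cmp M (pi2 M ?A ?B) (cmp M (tup M f g) k))
        = cmp M (tup M f g) k"
    by (rule tup_eta) (use assms in auto)
  then show ?thesis using assms by simp
qed

lemma tup_pi[simp]: "A \<in> Ob M \<Longrightarrow> B \<in> Ob M \<Longrightarrow> tup M (pi1 M A B) (pi2 M A B) = idm M (prd M A B)"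
  using tup_eta[of "idm M (prd M A B)" A B] by simp

lemma tup_uniq:
  assumes "h \<in> Ar M" "scod M h = prd M A B" "A \<in> Ob M" "B \<in> Ob M"
   "cmp M (pi1 M A B) h = f" "cmp M (pi2 M A B) h = g"
  shows "h = tup M f g"
  using tup_eta[OF assms(1-4)] assms(5,6) by simp

lemma parr_ar[simp]:
  assumes "f \<in> Ar M" "g \<in> Ar M" "sdom M f = A" "sdom M g = B"
  shows "parr M A B f g \<in> Ar M" "sdom M (parr M A B f g) = prd M A B"
    "scod M (parr M A B f g) = prd M (scod M f) (scod M g)"
  using assms by (auto simp: parr_def)

lemma parr_tup[simp]:
  assumes "f \<in> Ar M" "g \<in> Ar M" "sdom M f = A" "sdom M g = B"
    "h \<in> Ar M" "k \<in> Ar M" "sdom M h = sdom M k" "scod M h = A" "scod M k = B"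
  shows "cmp M (parr M A B f g) (tup M h k) = tup M (cmp M f h) (cmp M g k)"
proof -
  have "A \<in> Ob M" "B \<in> Ob M" using assms ar_ob by blast+
  then show ?thesis using assms by (simp add: parr_def tup_comp)
qed

lemma parr_tup_k[simp]:
  assumes "f \<in> Ar M" "g \<in> Ar M" "sdom M f = A" "sdom M g = B"
    "h \<in> Ar M" "k \<in> Ar M" "sdom M h = sdom M k" "scod M h = A" "scod M k = B"
    "l \<in> Ar M" "scod M l = sdom M h"
  shows "cmp M (parr M A B f g) (cmp M (tup M h k) l) = cmp M (tup M (cmp M f h) (cmp M g k)) l"
proof -
  have 1: "cmp M (cmp M (parr M A B f g) (tup M h k)) l = cmp M (tup M (cmp M f h) (cmp M g k)) l"
    using assms by simp
  have 2: "cmp M (cmp M (parr M A B f g) (tup M h k)) l = cmp M (parr M A B f g) (cmp M (tup M h k) l)"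
    by (rule assoc) (use assms in simp_all)
  show ?thesis using 1 2 by metis
qed

lemma parr_id[simp]: "A \<in> Ob M \<Longrightarrow> B \<in> Ob M \<Longrightarrow> parr M A B (idm M A) (idm M B) = idm M (prd M A B)"
  by (simp add: parr_def)

lemma pi_parr:
  assumes "f \<in> Ar M" "g \<in> Ar M" "sdom M f = A" "sdom M g = B" "scod M f = A'" "scod M g = B'"
  shows "cmp M (pi1 M A' B') (parr M A B f g) = cmp M f (pi1 M A B)"
    "cmp M (pi2 M A' B') (parr M A B f g) = cmp M g (pi2 M A B)"
proof -
  have "A \<in> Ob M" "B \<in> Ob M" using assms ar_ob by blast+
  then show "cmp M (pi1 M A' B') (parr M A B f g) = cmp M f (pi1 M A B)"
    "cmp M (pi2 M A' B') (parr M A B f g) = cmp M g (pi2 M A B)" using assms by (simp_all add: parr_def)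
qed

declare tup_comp[simp]

lemma expo_ob[simp]: "X \<in> Ob M \<Longrightarrow> Y \<in> Ob M \<Longrightarrow> expo M X Y \<in> Ob M"
  using expos by (simp add: has_exponentials_def)

lemma evl_ar[simp]:
  assumes "X \<in> Ob M" "Y \<in> Ob M"
  shows "evl M X Y \<in> Ar M" "sdom M (evl M X Y) = prd M (expo M X Y) X" "scod M (evl M X Y) = Y"
  using expos assms by (auto simp: has_exponentials_def hom_def)

lemma cur_ar[simp]:
  assumes "f \<in> Ar M" "sdom M f = prd M Z X" "Z \<in> Ob M" "X \<in> Ob M"
  shows "cur M Z X f \<in> Ar M" "sdom M (cur M Z X f) = Z" "scod M (cur M Z X f) = expo M X (scod M f)"
proof -
  have "f \<in> hom M (prd M Z X) (scod M f)" "scod M f \<in> Ob M" using assms by (auto simp: hom_def)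
  then have "cur M Z X f \<in> hom M Z (expo M X (scod M f))" using expos assms unfolding has_exponentials_def by blast
  then show "cur M Z X f \<in> Ar M" "sdom M (cur M Z X f) = Z" "scod M (cur M Z X f) = expo M X (scod M f)"
    by (auto simp: hom_def)
qed

lemma evl_cur:
  assumes "f \<in> Ar M" "sdom M f = prd M Z X" "Z \<in> Ob M" "X \<in> Ob M" "scod M f = Y"
  shows "cmp M (evl M X Y) (parr M Z X (cur M Z X f) (idm M X)) = f"
proof -
  have "f \<in> hom M (prd M Z X) Y" "Y \<in> Ob M" using assms by (auto simp: hom_def)
  then show ?thesis using expos assms unfolding has_exponentials_def by blast
qed

lemma cur_uniq:
  assumes "h \<in> Ar M" "sdom M h = Z" "scod M h = expo M X Y" "X \<in> Ob M" "Y \<in> Ob M" "Z \<in> Ob M"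
    "cmp M (evl M X Y) (parr M Z X h (idm M X)) = f"
  shows "cur M Z X f = h"
proof -
  have "h \<in> hom M Z (expo M X Y)" using assms by (auto simp: hom_def)
  then show ?thesis using expos assms unfolding has_exponentials_def by blast
qed

lemma parr_comp:
  assumes "f \<in> Ar M" "f' \<in> Ar M" "g \<in> Ar M" "g' \<in> Ar M" "sdom M f = A" "sdom M f' = A'"
    "sdom M g = scod M f" "sdom M g' = scod M f'"
  shows "cmp M (parr M (scod M f) (scod M f') g g') (parr M A A' f f') = parr M A A' (cmp M g f) (cmp M g' f')"
proof -
  have "A \<in> Ob M" "A' \<in> Ob M" using assms ar_ob by blast+
  then show ?thesis using assms by (simp add: parr_def)
qed

lemma cur_nat:
  assumes "f \<in> Ar M" "sdom M f = prd M Z X" "Z \<in> Ob M" "X \<in> Ob M" "r \<in> Ar M" "scod M r = Z"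
  shows "cur M (sdom M r) X (cmp M f (parr M (sdom M r) X r (idm M X))) = cmp M (cur M Z X f) r"
proof (rule cur_uniq[where Y="scod M f"])
  have W: "sdom M r \<in> Ob M" using assms by simp
  have "cmp M (parr M Z X (cur M Z X f) (idm M X)) (parr M (sdom M r) X r (idm M X))
     = parr M (sdom M r) X (cmp M (cur M Z X f) r) (idm M X)"
    using parr_comp[of r "idm M X" "cur M Z X f" "idm M X" "sdom M r" X] assms by simp
  then have "cmp M (evl M X (scod M f)) (parr M (sdom M r) X (cmp M (cur M Z X f) r) (idm M X))
     = cmp M (cmp M (evl M X (scod M f)) (parr M Z X (cur M Z X f) (idm M X))) (parr M (sdom M r) X r (idm M X))"
    using assms W by (simp add: parr_def)
  also have "\<dots> = cmp M f (parr M (sdom M r) X r (idm M X))"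
    using evl_cur[of f Z X "scod M f"] assms by simp
  finally show "cmp M (evl M X (scod M f)) (parr M (sdom M r) X (cmp M (cur M Z X f) r) (idm M X)) =
    cmp M f (parr M (sdom M r) X r (idm M X))" .
qed (use assms in auto)

lemma Dob_ob[simp]: "A \<in> Ob M \<Longrightarrow> Dob M A \<in> Ob M"
  and Dar_id[simp]: "A \<in> Ob M \<Longrightarrow> Dar M (idm M A) = idm M (Dob M A)"
  using func by (auto simp: is_endofunctor_def)

lemma Dar_ar[simp]:
  assumes "f \<in> Ar M"
  shows "Dar M f \<in> Ar M" "sdom M (Dar M f) = Dob M (sdom M f)" "scod M (Dar M f) = Dob M (scod M f)"
proof -
  have "f \<in> hom M (sdom M f) (scod M f)" using assms by (auto simp: hom_def)
  then have "Dar M f \<in> hom M (Dob M (sdom M f)) (Dob M (scod M f))" using func unfolding is_endofunctor_def by blast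
  then show "Dar M f \<in> Ar M" "sdom M (Dar M f) = Dob M (sdom M f)" "scod M (Dar M f) = Dob M (scod M f)"
    by (auto simp: hom_def)
qed

lemma Dar_cmp[simp]:
  assumes "f \<in> Ar M" "g \<in> Ar M" "sdom M g = scod M f"
  shows "Dar M (cmp M g f) = cmp M (Dar M g) (Dar M f)"
proof -
  have "f \<in> hom M (sdom M f) (scod M f)" "g \<in> hom M (scod M f) (scod M g)" using assms by (auto simp: hom_def)
  then show ?thesis using func unfolding is_endofunctor_def by blast
qed

lemma st_ar[simp]:
  assumes "X \<in> Ob M" "Y \<in> Ob M"
  shows "st M X Y \<in> Ar M" "sdom M (st M X Y) = prd M X (Dob M Y)" "scod M (st M X Y) = Dob M (prd M X Y)"
  using stren assms by (auto simp: is_strength_def hom_def)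

lemma st_nat:
  assumes "f \<in> Ar M" "g \<in> Ar M"
  shows "cmp M (st M (scod M f) (scod M g)) (parr M (sdom M f) (Dob M (sdom M g)) f (Dar M g))
        = cmp M (Dar M (parr M (sdom M f) (sdom M g) f g)) (st M (sdom M f) (sdom M g))"
proof -
  have "f \<in> hom M (sdom M f) (scod M f)" "g \<in> hom M (sdom M g) (scod M g)" using assms by (auto simp: hom_def)
  then show ?thesis using stren unfolding is_strength_def by blast
qed

lemma st_unit: "X \<in> Ob M \<Longrightarrow> cmp M (Dar M (pi2 M (trm M) X)) (st M (trm M) X) = pi2 M (trm M) (Dob M X)"
  using stren unfolding is_strength_def by blast

lemma st_assoc: "X \<in> Ob M \<Longrightarrow> Y \<in> Ob M \<Longrightarrow> Z \<in> Ob M \<Longrightarrow>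
        cmp M (Dar M (alpha M X Y Z)) (st M (prd M X Y) Z)
        = cmp M (st M X (prd M Y Z))
            (cmp M (parr M X (prd M Y (Dob M Z)) (idm M X) (st M Y Z)) (alpha M X Y (Dob M Z)))"
  using stren unfolding is_strength_def by blast

lemma mu_ar[simp]:
  assumes "X \<in> Ob M"
  shows "mu M X \<in> Ar M" "sdom M (mu M X) = Dob M (Dob M X)" "scod M (mu M X) = Dob M X"
  using mult assms by (auto simp: is_strong_semimonad_mult_def hom_def)

lemma mu_nat: "f \<in> Ar M \<Longrightarrow> cmp M (mu M (scod M f)) (Dar M (Dar M f)) = cmp M (Dar M f) (mu M (sdom M f))"
  using mult unfolding is_strong_semimonad_mult_def hom_def by blast

lemma mu_assoc: "X \<in> Ob M \<Longrightarrow> cmp M (mu M X) (mu M (Dob M X)) = cmp M (mu M X) (Dar M (mu M X))"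
  using mult unfolding is_strong_semimonad_mult_def by blast

lemma mu_st: "X \<in> Ob M \<Longrightarrow> Y \<in> Ob M \<Longrightarrow>
        cmp M (mu M (prd M X Y)) (cmp M (Dar M (st M X Y)) (st M X (Dob M Y)))
        = cmp M (st M X Y) (parr M X (Dob M (Dob M Y)) (idm M X) (mu M Y))"
  using mult unfolding is_strong_semimonad_mult_def by blast

end

context sjm begin

lemma st_pi2:
  assumes X: "X \<in> Ob M" and A: "A \<in> Ob M"
  shows "cmp M (Dar M (pi2 M X A)) (st M X A) = pi2 M X (Dob M A)"
proof -
  let ?p = "parr M X A (bang M X) (idm M A)"
  have e1: "pi2 M X A = cmp M (pi2 M (trm M) A) ?p"
    using pi_parr(2)[of "bang M X" "idm M A" X A "trm M" A] X A by simp
  have e2: "cmp M (st M (trm M) A) (parr M X (Dob M A) (bang M X) (idm M (Dob M A)))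
      = cmp M (Dar M ?p) (st M X A)"
    using st_nat[of "bang M X" "idm M A"] X A by simp
  have "cmp M (Dar M (pi2 M X A)) (st M X A) = cmp M (Dar M (cmp M (pi2 M (trm M) A) ?p)) (st M X A)"
    using e1 by simp
  also have "\<dots> = cmp M (Dar M (pi2 M (trm M) A)) (cmp M (Dar M ?p) (st M X A))"
    using X A by simp
  also have "\<dots> = cmp M (Dar M (pi2 M (trm M) A)) (cmp M (st M (trm M) A) (parr M X (Dob M A) (bang M X) (idm M (Dob M A))))"
    using e2 by simp
  also have "\<dots> = cmp M (cmp M (Dar M (pi2 M (trm M) A)) (st M (trm M) A)) (parr M X (Dob M A) (bang M X) (idm M (Dob M A)))"
    using X A by simp
  also have "\<dots> = cmp M (pi2 M (trm M) (Dob M A)) (parr M X (Dob M A) (bang M X) (idm M (Dob M A)))"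
    using st_unit A by simp
  also have "\<dots> = pi2 M X (Dob M A)"
    using pi_parr(2)[of "bang M X" "idm M (Dob M A)" X "Dob M A" "trm M" "Dob M A"] X A by simp
  finally show ?thesis .
qed

lemma K1:
  assumes G: "G \<in> Ob M" and A: "A \<in> Ob M" and B: "B \<in> Ob M"
    and t: "t \<in> Ar M" "sdom M t = G" "scod M t = Dob M A"
    and g: "g \<in> Ar M" "sdom M g = prd M G A" "scod M g = B"
  shows "cmp M (st M G B) (tup M (idm M G) (cmp M (Dar M g) (cmp M (st M G A) (tup M (idm M G) t))))
       = cmp M (Dar M (tup M (pi1 M G A) g)) (cmp M (st M G A) (tup M (idm M G) t))"
proof -
  define s where "s = cmp M (st M G A) (tup M (idm M G) t)"
  have s: "s \<in> Ar M" "sdom M s = G" "scod M s = Dob M (prd M G A)" using G A t by (simp_all add: s_def)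
  define w where "w = tup M (tup M (idm M G) (idm M G)) t"
  have w: "w \<in> Ar M" "sdom M w = G" "scod M w = prd M (prd M G G) (Dob M A)" using G A t by (simp_all add: w_def)
  have a: "tup M (idm M G) (cmp M (Dar M g) s) = cmp M (parr M G (Dob M (prd M G A)) (idm M G) (Dar M g)) (tup M (idm M G) s)"
    using G A s g by simp
  have b: "cmp M (st M G B) (parr M G (Dob M (prd M G A)) (idm M G) (Dar M g))
       = cmp M (Dar M (parr M G (prd M G A) (idm M G) g)) (st M G (prd M G A))"
    using st_nat[of "idm M G" g] G A g by simp
  have c0: "cmp M (cmp M (parr M G (prd M G (Dob M A)) (idm M G) (st M G A)) (alpha M G G (Dob M A))) w
      = tup M (idm M G) s"
    using G A t by (simp add: w_def s_def alpha_def parr_def)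
  have c: "cmp M (st M G (prd M G A)) (tup M (idm M G) s) = cmp M (Dar M (alpha M G G A)) (cmp M (st M (prd M G G) A) w)"
  proof -
    have "cmp M (Dar M (alpha M G G A)) (cmp M (st M (prd M G G) A) w)
        = cmp M (cmp M (Dar M (alpha M G G A)) (st M (prd M G G) A)) w"
      using G A w by (simp add: alpha_def)
    also have "\<dots> = cmp M (cmp M (st M G (prd M G A))
            (cmp M (parr M G (prd M G (Dob M A)) (idm M G) (st M G A)) (alpha M G G (Dob M A)))) w"
      using st_assoc[OF G G A] by simp
    also have "\<dots> = cmp M (st M G (prd M G A))
            (cmp M (cmp M (parr M G (prd M G (Dob M A)) (idm M G) (st M G A)) (alpha M G G (Dob M A))) w)"
      using G A w by (simp add: alpha_def parr_def)
    also have "\<dots> = cmp M (st M G (prd M G A)) (tup M (idm M G) s)" using c0 by simp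
    finally show ?thesis by simp
  qed
  have d0: "w = cmp M (parr M G (Dob M A) (tup M (idm M G) (idm M G)) (idm M (Dob M A))) (tup M (idm M G) t)"
    using G A t by (simp add: w_def parr_def)
  have d: "cmp M (st M (prd M G G) A) w = cmp M (Dar M (parr M G A (tup M (idm M G) (idm M G)) (idm M A))) s"
  proof -
    have "cmp M (st M (prd M G G) A) w
       = cmp M (cmp M (st M (prd M G G) A) (parr M G (Dob M A) (tup M (idm M G) (idm M G)) (idm M (Dob M A)))) (tup M (idm M G) t)"
      using d0 G A t by (simp add: parr_def)
    also have "\<dots> = cmp M (cmp M (Dar M (parr M G A (tup M (idm M G) (idm M G)) (idm M A))) (st M G A)) (tup M (idm M G) t)"
      using st_nat[of "tup M (idm M G) (idm M G)" "idm M A"] G A by simp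
    also have "\<dots> = cmp M (Dar M (parr M G A (tup M (idm M G) (idm M G)) (idm M A))) s"
      using G A t by (simp add: s_def parr_def)
    finally show ?thesis .
  qed
  have f: "cmp M (parr M G (prd M G A) (idm M G) g) (cmp M (alpha M G G A) (parr M G A (tup M (idm M G) (idm M G)) (idm M A)))
     = tup M (pi1 M G A) g"
    using G A g by (simp add: alpha_def parr_def)
  have "cmp M (st M G B) (tup M (idm M G) (cmp M (Dar M g) s))
      = cmp M (cmp M (st M G B) (parr M G (Dob M (prd M G A)) (idm M G) (Dar M g))) (tup M (idm M G) s)"
    using a G A B g s by (simp add: parr_def)
  also have "\<dots> = cmp M (Dar M (parr M G (prd M G A) (idm M G) g)) (cmp M (st M G (prd M G A)) (tup M (idm M G) s))"
    using b G A B g s by (simp add: parr_def)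
  also have "\<dots> = cmp M (Dar M (parr M G (prd M G A) (idm M G) g)) (cmp M (Dar M (alpha M G G A))
        (cmp M (Dar M (parr M G A (tup M (idm M G) (idm M G)) (idm M A))) s))"
    using c d by simp
  also have "\<dots> = cmp M (cmp M (Dar M (parr M G (prd M G A) (idm M G) g)) (cmp M (Dar M (alpha M G G A))
        (Dar M (parr M G A (tup M (idm M G) (idm M G)) (idm M A))))) s"
    using G A g s by (simp add: alpha_def parr_def)
  also have "\<dots> = cmp M (Dar M (tup M (pi1 M G A) g)) s"
  proof -
    let ?p = "parr M G (prd M G A) (idm M G) g" and ?a = "alpha M G G A"
      and ?q = "parr M G A (tup M (idm M G) (idm M G)) (idm M A)"
    have 1: "Dar M (cmp M ?a ?q) = cmp M (Dar M ?a) (Dar M ?q)"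
      by (rule Dar_cmp) (use G A in \<open>simp_all add: alpha_def parr_def\<close>)
    have 2: "Dar M (cmp M ?p (cmp M ?a ?q)) = cmp M (Dar M ?p) (Dar M (cmp M ?a ?q))"
      by (rule Dar_cmp) (use G A g in \<open>simp_all add: alpha_def parr_def\<close>)
    have "cmp M (Dar M ?p) (cmp M (Dar M ?a) (Dar M ?q)) = Dar M (tup M (pi1 M G A) g)"
      using 1 2 f by metis
    then show ?thesis by (simp only:)
  qed
  finally show ?thesis by (simp add: s_def)
qed

lemma cmp_k:
  assumes "cmp M a b = c" "a \<in> Ar M" "b \<in> Ar M" "w \<in> Ar M" "sdom M a = scod M b" "sdom M b = scod M w"
  shows "cmp M a (cmp M b w) = cmp M c w"
  using assms assoc[of w b a] by simp

lemma letmap_nat: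
  assumes r: "r \<in> Ar M" "sdom M r = X" "scod M r = Y" and A: "A \<in> Ob M"
    and t: "t \<in> Ar M" "sdom M t = Y" "scod M t = Dob M A"
    and u: "u \<in> Ar M" "sdom M u = prd M Y A"
  shows "cmp M (Dar M (cmp M u (tup M (cmp M r (pi1 M X A)) (pi2 M X A)))) (cmp M (st M X A) (tup M (idm M X) (cmp M t r)))
     = cmp M (cmp M (Dar M u) (cmp M (st M Y A) (tup M (idm M Y) t))) r"
proof -
  have X: "X \<in> Ob M" "Y \<in> Ob M" using r ar_ob by blast+
  let ?p = "tup M (cmp M r (pi1 M X A)) (pi2 M X A)"
  have e: "cmp M (Dar M ?p) (st M X A) = cmp M (st M Y A) (tup M (cmp M r (pi1 M X (Dob M A))) (pi2 M X (Dob M A)))"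
    using st_nat[of r "idm M A"] r A X by (simp add: parr_def)
  have ek: "cmp M (Dar M ?p) (cmp M (st M X A) (tup M (idm M X) (cmp M t r)))
      = cmp M (cmp M (st M Y A) (tup M (cmp M r (pi1 M X (Dob M A))) (pi2 M X (Dob M A)))) (tup M (idm M X) (cmp M t r))"
    by (rule cmp_k[OF e]) (use r A X t in simp_all)
  show ?thesis using ek r A X t u by simp
qed

lemma K2a:
  assumes G: "G \<in> Ob M" and A: "A \<in> Ob M" and B: "B \<in> Ob M"
    and t: "t \<in> Ar M" "sdom M t = G" "scod M t = Dob M A"
    and u: "u \<in> Ar M" "sdom M u = prd M G A" "scod M u = Dob M B"
  shows "cmp M (st M G B) (tup M (idm M G) (cmp M (mu M B) (cmp M (Dar M u) (cmp M (st M G A) (tup M (idm M G) t)))))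
       = cmp M (mu M (prd M G B)) (cmp M (Dar M (cmp M (st M G B) (tup M (pi1 M G A) u))) (cmp M (st M G A) (tup M (idm M G) t)))"
proof -
  define s where "s = cmp M (st M G A) (tup M (idm M G) t)"
  have s: "s \<in> Ar M" "sdom M s = G" "scod M s = Dob M (prd M G A)" using G A t by (simp_all add: s_def)
  define k where "k = cmp M (Dar M u) s"
  have k: "k \<in> Ar M" "sdom M k = G" "scod M k = Dob M (Dob M B)" using s u by (simp_all add: k_def)
  let ?p = "parr M G (Dob M (Dob M B)) (idm M G) (mu M B)"
  have 1: "tup M (idm M G) (cmp M (mu M B) k) = cmp M ?p (tup M (idm M G) k)"
    using G B k by (simp add: parr_def)
  have 2: "cmp M (st M G B) ?p = cmp M (mu M (prd M G B)) (cmp M (Dar M (st M G B)) (st M G (Dob M B)))"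
    using mu_st[OF G B] by simp
  have 3: "cmp M (st M G (Dob M B)) (tup M (idm M G) k) = cmp M (Dar M (tup M (pi1 M G A) u)) s"
    using K1[OF G A _ t u] B by (simp add: s_def k_def)
  have "cmp M (st M G B) (tup M (idm M G) (cmp M (mu M B) k)) = cmp M (st M G B) (cmp M ?p (tup M (idm M G) k))"
    using 1 by simp
  also have "\<dots> = cmp M (cmp M (st M G B) ?p) (tup M (idm M G) k)"
    by (rule assoc[symmetric]) (use G B k in \<open>simp_all add: parr_def\<close>)
  also have "\<dots> = cmp M (cmp M (mu M (prd M G B)) (cmp M (Dar M (st M G B)) (st M G (Dob M B)))) (tup M (idm M G) k)"
    using 2 by simp
  also have "\<dots> = cmp M (mu M (prd M G B)) (cmp M (Dar M (st M G B)) (cmp M (st M G (Dob M B)) (tup M (idm M G) k)))"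
    using G B k by simp
  also have "\<dots> = cmp M (mu M (prd M G B)) (cmp M (Dar M (st M G B)) (cmp M (Dar M (tup M (pi1 M G A) u)) s))"
    using 3 by simp
  also have "\<dots> = cmp M (mu M (prd M G B)) (cmp M (Dar M (cmp M (st M G B) (tup M (pi1 M G A) u))) s)"
    using G A B u s by simp
  finally show ?thesis by (simp add: s_def k_def)
qed

lemma K2b:
  assumes G: "G \<in> Ob M" and A: "A \<in> Ob M" and B: "B \<in> Ob M"
    and u: "u \<in> Ar M" "sdom M u = prd M G A" "scod M u = Dob M B"
  shows "cmp M (st M G B) (tup M (pi1 M G A) u)
     = cmp M (Dar M (tup M (cmp M (pi1 M G A) (pi1 M (prd M G A) B)) (pi2 M (prd M G A) B)))
         (cmp M (st M (prd M G A) B) (tup M (idm M (prd M G A)) u))"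
proof -
  have e: "cmp M (st M G B) (parr M (prd M G A) (Dob M B) (pi1 M G A) (Dar M (idm M B)))
     = cmp M (Dar M (parr M (prd M G A) B (pi1 M G A) (idm M B))) (st M (prd M G A) B)"
    using st_nat[of "pi1 M G A" "idm M B"] G A B by simp
  have "cmp M (st M G B) (cmp M (parr M (prd M G A) (Dob M B) (pi1 M G A) (Dar M (idm M B))) (tup M (idm M (prd M G A)) u))
      = cmp M (cmp M (Dar M (parr M (prd M G A) B (pi1 M G A) (idm M B))) (st M (prd M G A) B)) (tup M (idm M (prd M G A)) u)"
    by (rule cmp_k[OF e]) (use G A B u in \<open>simp_all add: parr_def\<close>)
  then show ?thesis using G A B u by (simp add: parr_def)
qed

lemma K2:
  assumes G: "G \<in> Ob M" and A: "A \<in> Ob M" and B: "B \<in> Ob M" and C: "C \<in> Ob M"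
    and t: "t \<in> Ar M" "sdom M t = G" "scod M t = Dob M A"
    and u: "u \<in> Ar M" "sdom M u = prd M G A" "scod M u = Dob M B"
    and u': "u' \<in> Ar M" "sdom M u' = prd M G B" "scod M u' = C"
  shows "cmp M (Dar M u') (cmp M (st M G B) (tup M (idm M G) (cmp M (mu M B) (cmp M (Dar M u) (cmp M (st M G A) (tup M (idm M G) t))))))
    = cmp M (mu M C) (cmp M (Dar M (cmp M (Dar M (cmp M u' (tup M (cmp M (pi1 M G A) (pi1 M (prd M G A) B)) (pi2 M (prd M G A) B))))
         (cmp M (st M (prd M G A) B) (tup M (idm M (prd M G A)) u)))) (cmp M (st M G A) (tup M (idm M G) t)))"
proof -
  define s where "s = cmp M (st M G A) (tup M (idm M G) t)"
  have s: "s \<in> Ar M" "sdom M s = G" "scod M s = Dob M (prd M G A)" using G A t by (simp_all add: s_def)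
  define X where "X = cmp M (st M G B) (tup M (pi1 M G A) u)"
  have X: "X \<in> Ar M" "sdom M X = prd M G A" "scod M X = Dob M (prd M G B)" using G A B u by (simp_all add: X_def)
  have 1: "cmp M (st M G B) (tup M (idm M G) (cmp M (mu M B) (cmp M (Dar M u) s)))
       = cmp M (mu M (prd M G B)) (cmp M (Dar M X) s)"
    using K2a[OF G A B t u] by (simp add: s_def X_def)
  have 2: "cmp M (Dar M u') (mu M (prd M G B)) = cmp M (mu M C) (Dar M (Dar M u'))"
    using mu_nat[of u'] u' by simp
  have "cmp M (Dar M u') (cmp M (st M G B) (tup M (idm M G) (cmp M (mu M B) (cmp M (Dar M u) s))))
     = cmp M (Dar M u') (cmp M (mu M (prd M G B)) (cmp M (Dar M X) s))" using 1 by simp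
  also have "\<dots> = cmp M (cmp M (mu M C) (Dar M (Dar M u'))) (cmp M (Dar M X) s)"
    by (rule cmp_k[OF 2]) (use G B C X s u' in simp_all)
  also have "\<dots> = cmp M (mu M C) (cmp M (Dar M (cmp M (Dar M u') X)) s)"
    using G B C X s u' by simp
  finally have "cmp M (Dar M u') (cmp M (st M G B) (tup M (idm M G) (cmp M (mu M B) (cmp M (Dar M u) s))))
      = cmp M (mu M C) (cmp M (Dar M (cmp M (Dar M u') X)) s)" .
  moreover have "cmp M (Dar M u') X = cmp M (Dar M (cmp M u' (tup M (cmp M (pi1 M G A) (pi1 M (prd M G A) B)) (pi2 M (prd M G A) B))))
         (cmp M (st M (prd M G A) B) (tup M (idm M (prd M G A)) u))"
    using K2b[OF G A B u] G A B u u' by (simp add: X_def)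
  ultimately show ?thesis by (simp add: s_def)
qed

lemma K3:
  assumes G: "G \<in> Ob M" and A: "A \<in> Ob M" and B: "B \<in> Ob M" and C: "C \<in> Ob M"
    and t: "t \<in> Ar M" "sdom M t = G" "scod M t = Dob M A"
    and u: "u \<in> Ar M" "sdom M u = prd M G A" "scod M u = Dob M B"
    and u': "u' \<in> Ar M" "sdom M u' = prd M G B" "scod M u' = Dob M C"
  shows "cmp M (mu M C) (cmp M (Dar M u') (cmp M (st M G B) (tup M (idm M G) (cmp M (mu M B) (cmp M (Dar M u) (cmp M (st M G A) (tup M (idm M G) t)))))))
    = cmp M (mu M C) (cmp M (Dar M (cmp M (mu M C) (cmp M (Dar M (cmp M u' (tup M (cmp M (pi1 M G A) (pi1 M (prd M G A) B)) (pi2 M (prd M G A) B))))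
         (cmp M (st M (prd M G A) B) (tup M (idm M (prd M G A)) u))))) (cmp M (st M G A) (tup M (idm M G) t)))"
proof -
  define s where "s = cmp M (st M G A) (tup M (idm M G) t)"
  have s: "s \<in> Ar M" "sdom M s = G" "scod M s = Dob M (prd M G A)" using G A t by (simp_all add: s_def)
  define Y where "Y = cmp M (Dar M (cmp M u' (tup M (cmp M (pi1 M G A) (pi1 M (prd M G A) B)) (pi2 M (prd M G A) B))))
         (cmp M (st M (prd M G A) B) (tup M (idm M (prd M G A)) u))"
  have Y: "Y \<in> Ar M" "sdom M Y = prd M G A" "scod M Y = Dob M (Dob M C)" using G A B u u' by (simp_all add: Y_def)
  have 1: "cmp M (Dar M u') (cmp M (st M G B) (tup M (idm M G) (cmp M (mu M B) (cmp M (Dar M u) s))))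
     = cmp M (mu M (Dob M C)) (cmp M (Dar M Y) s)"
    using K2[OF G A B _ t u u'] C by (simp add: s_def Y_def)
  have 2: "cmp M (mu M C) (mu M (Dob M C)) = cmp M (mu M C) (Dar M (mu M C))" using mu_assoc C by simp
  have "cmp M (mu M C) (cmp M (mu M (Dob M C)) (cmp M (Dar M Y) s))
      = cmp M (cmp M (mu M C) (Dar M (mu M C))) (cmp M (Dar M Y) s)"
    by (rule cmp_k[OF 2]) (use C Y s in simp_all)
  also have "\<dots> = cmp M (mu M C) (cmp M (Dar M (cmp M (mu M C) Y)) s)"
    using C Y s by simp
  finally show ?thesis using 1 by (simp add: s_def Y_def)
qed

end

locale sjmi = sjm + fixes \<iota> assumes iota: "\<iota> \<in> Ob M"
begin

lemma ty_ob[simp]: "ty_obj M \<iota> A \<in> Ob M"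
  by (induction A) (simp_all add: iota)

lemma ctx_ob[simp]: "ctx_obj M \<iota> G \<in> Ob M"
  by (induction G) simp_all

lemma var_sem_ar[simp]:
  "i < length G \<Longrightarrow> var_sem M \<iota> G i \<in> Ar M"
  "i < length G \<Longrightarrow> sdom M (var_sem M \<iota> G i) = ctx_obj M \<iota> G"
  "i < length G \<Longrightarrow> scod M (var_sem M \<iota> G i) = ty_obj M \<iota> (G ! i)"
proof (induction G arbitrary: i)
  case Nil
  { case 1 then show ?case by simp }
  { case 2 then show ?case by simp }
  { case 3 then show ?case by simp }
next
  case (Cons a G)
  { case 1 then show ?case using Cons by (cases i) auto }
  { case 2 then show ?case using Cons by (cases i) auto }
  { case 3 then show ?case using Cons by (cases i) auto }
qed

lemma sem_ar:
  "typing G t A \<Longrightarrow> sem M \<iota> G t \<in> Ar M \<and> sdom M (sem M \<iota> G t) = ctx_obj M \<iota> G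
     \<and> scod M (sem M \<iota> G t) = ty_obj M \<iota> A"
proof (induction rule: typing.induct)
  case (ty_var i \<Gamma>) then show ?case by simp
next
  case (ty_unit \<Gamma>) then show ?case by simp
next
  case (ty_pair \<Gamma> t A u B) then show ?case by simp
next
  case (ty_fst \<Gamma> t A B) then show ?case by (simp add: tyof_eq)
next
  case (ty_snd \<Gamma> t A B) then show ?case by (simp add: tyof_eq)
next
  case (ty_lam A \<Gamma> t B) then show ?case by simp
next
  case (ty_app \<Gamma> t A B u) then show ?case by (simp add: tyof_eq)
next
  case (ty_letmap \<Gamma> t A u B) then show ?case by (simp add: tyof_eq Let_def)
next
  case (ty_let \<Gamma> t A u B) then show ?case by (simp add: tyof_eq Let_def)
qed

lemma sem_ar'[simp]:
  "typing G t A \<Longrightarrow> sem M \<iota> G t \<in> Ar M"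
  "typing G t A \<Longrightarrow> sdom M (sem M \<iota> G t) = ctx_obj M \<iota> G"
  "typing G t A \<Longrightarrow> scod M (sem M \<iota> G t) = ty_obj M \<iota> A"
  using sem_ar by blast+

abbreviation "cx \<equiv> ctx_obj M \<iota>"
abbreviation "tyo \<equiv> ty_obj M \<iota>"
abbreviation "S \<equiv> sem M \<iota>"

definition wk where
  "wk r G A = tup M (cmp M r (pi1 M (cx G) (tyo A))) (pi2 M (cx G) (tyo A))"

lemma wk_ar[simp]: "r \<in> Ar M \<Longrightarrow> sdom M r = cx G \<Longrightarrow> wk r G A \<in> Ar M"
  "r \<in> Ar M \<Longrightarrow> sdom M r = cx G \<Longrightarrow> sdom M (wk r G A) = cx (A#G)"
  "r \<in> Ar M \<Longrightarrow> sdom M r = cx G \<Longrightarrow> scod M (wk r G A) = prd M (scod M r) (tyo A)"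
  by (simp_all add: wk_def)

lemma wk_var0: "r \<in> Ar M \<Longrightarrow> sdom M r = cx G \<Longrightarrow> scod M r = cx D \<Longrightarrow>
   cmp M (var_sem M \<iota> (A#D) 0) (wk r G A) = var_sem M \<iota> (A#G) 0"
  by (simp add: wk_def)

lemma wk_varS: "r \<in> Ar M \<Longrightarrow> sdom M r = cx G \<Longrightarrow> scod M r = cx D \<Longrightarrow> j < length D \<Longrightarrow>
   cmp M (var_sem M \<iota> (A#D) (Suc j)) (wk r G A) = cmp M (cmp M (var_sem M \<iota> D j) r) (pi1 M (cx G) (tyo A))"
  by (simp add: wk_def)

lemma lam_nat:
  assumes "r \<in> Ar M" "sdom M r = cx G" "scod M r = cx D" "f \<in> Ar M" "sdom M f = cx (A#D)"
  shows "cur M (cx G) (tyo A) (cmp M f (wk r G A)) = cmp M (cur M (cx D) (tyo A) f) r"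
  using cur_nat[of f "cx D" "tyo A" r] assms by (simp add: wk_def parr_def)

lemma sem_ren:
  "typing D t A \<Longrightarrow> r \<in> Ar M \<Longrightarrow> sdom M r = cx G \<Longrightarrow> scod M r = cx D \<Longrightarrow>
   (\<forall>i<length D. f i < length G \<and> G ! f i = D ! i \<and> cmp M (var_sem M \<iota> D i) r = var_sem M \<iota> G (f i)) \<Longrightarrow>
   S G (ren f t) = cmp M (S D t) r"
proof (induction arbitrary: G f r rule: typing.induct)
  case (ty_var i \<Gamma>) then show ?case by simp
next
  case (ty_unit \<Gamma>)
  have "cmp M (bang M (cx \<Gamma>)) r = bang M (cx G)" by (rule bang_uniq) (use ty_unit.prems in simp_all)
  then show ?case by simp
next
  case (ty_pair \<Gamma> t A u B) then show ?case by simp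
next
  case (ty_fst \<Gamma> t A B)
  have "typing G (ren f t) (TyProd A B)" using typing_ren ty_fst by blast
  then show ?case using ty_fst by (simp add: tyof_eq)
next
  case (ty_snd \<Gamma> t A B)
  have "typing G (ren f t) (TyProd A B)" using typing_ren ty_snd by blast
  then show ?case using ty_snd by (simp add: tyof_eq)
next
  case (ty_app \<Gamma> t A B u)
  have "typing G (ren f t) (TyArr A B)" using typing_ren ty_app by blast
  then show ?case using ty_app by (simp add: tyof_eq)
next
  case (ty_lam A \<Gamma> t B)
  have c: "\<forall>i<length (A#\<Gamma>). upr f i < length (A#G) \<and> (A#G) ! upr f i = (A#\<Gamma>) ! i \<and>
     cmp M (var_sem M \<iota> (A#\<Gamma>) i) (wk r G A) = var_sem M \<iota> (A#G) (upr f i)"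
  proof (intro allI impI)
    fix i assume i: "i < length (A#\<Gamma>)"
    show "upr f i < length (A#G) \<and> (A#G) ! upr f i = (A#\<Gamma>) ! i \<and>
     cmp M (var_sem M \<iota> (A#\<Gamma>) i) (wk r G A) = var_sem M \<iota> (A#G) (upr f i)"
    proof (cases i)
      case 0 then show ?thesis using ty_lam.prems wk_var0 by simp
    next
      case (Suc j)
      then have j: "j < length \<Gamma>" using i by simp
      then show ?thesis using Suc ty_lam.prems wk_varS[of r G \<Gamma> j A] by simp
    qed
  qed
  have "S (A#G) (ren (upr f) t) = cmp M (S (A#\<Gamma>) t) (wk r G A)"
    by (rule ty_lam.IH) (use ty_lam.prems c in simp_all)
  then show ?case using ty_lam lam_nat by simp
next
  case (ty_letmap \<Gamma> t A u B)
  have c: "\<forall>i<length (A#\<Gamma>). upr f i < length (A#G) \<and> (A#G) ! upr f i = (A#\<Gamma>) ! i \<and>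
     cmp M (var_sem M \<iota> (A#\<Gamma>) i) (wk r G A) = var_sem M \<iota> (A#G) (upr f i)"
  proof (intro allI impI)
    fix i assume i: "i < length (A#\<Gamma>)"
    show "upr f i < length (A#G) \<and> (A#G) ! upr f i = (A#\<Gamma>) ! i \<and>
     cmp M (var_sem M \<iota> (A#\<Gamma>) i) (wk r G A) = var_sem M \<iota> (A#G) (upr f i)"
    proof (cases i)
      case 0 then show ?thesis using ty_letmap.prems wk_var0 by simp
    next
      case (Suc j)
      then have j: "j < length \<Gamma>" using i by simp
      then show ?thesis using Suc ty_letmap.prems wk_varS[of r G \<Gamma> j A] by simp
    qed
  qed
  have u: "S (A#G) (ren (upr f) u) = cmp M (S (A#\<Gamma>) u) (wk r G A)"
    by (rule ty_letmap.IH(2)) (use ty_letmap.prems c in simp_all)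
  have t: "S G (ren f t) = cmp M (S \<Gamma> t) r" by (rule ty_letmap.IH(1)) (use ty_letmap.prems in simp_all)
  have ty: "typing G (ren f t) (TyDia A)" using typing_ren ty_letmap by blast
  show ?case using ty_letmap ty t u letmap_nat[of r "cx G" "cx \<Gamma>" "tyo A" "S \<Gamma> t" "S (A#\<Gamma>) u"]
    by (simp add: tyof_eq Let_def wk_def)
next
  case (ty_let \<Gamma> t A u B)
  have c: "\<forall>i<length (A#\<Gamma>). upr f i < length (A#G) \<and> (A#G) ! upr f i = (A#\<Gamma>) ! i \<and>
     cmp M (var_sem M \<iota> (A#\<Gamma>) i) (wk r G A) = var_sem M \<iota> (A#G) (upr f i)"
  proof (intro allI impI)
    fix i assume i: "i < length (A#\<Gamma>)"
    show "upr f i < length (A#G) \<and> (A#G) ! upr f i = (A#\<Gamma>) ! i \<and>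
     cmp M (var_sem M \<iota> (A#\<Gamma>) i) (wk r G A) = var_sem M \<iota> (A#G) (upr f i)"
    proof (cases i)
      case 0 then show ?thesis using ty_let.prems wk_var0 by simp
    next
      case (Suc j)
      then have j: "j < length \<Gamma>" using i by simp
      then show ?thesis using Suc ty_let.prems wk_varS[of r G \<Gamma> j A] by simp
    qed
  qed
  have u: "S (A#G) (ren (upr f) u) = cmp M (S (A#\<Gamma>) u) (wk r G A)"
    by (rule ty_let.IH(2)) (use ty_let.prems c in simp_all)
  have t: "S G (ren f t) = cmp M (S \<Gamma> t) r" by (rule ty_let.IH(1)) (use ty_let.prems in simp_all)
  have ty: "typing G (ren f t) (TyDia A)" using typing_ren ty_let by blast
  have tyu: "typing (A#G) (ren (upr f) u) (TyDia B)" using typing_ren[OF ty_let(2)] c by blast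
  show ?case using ty_let ty tyu t u letmap_nat[of r "cx G" "cx \<Gamma>" "tyo A" "S \<Gamma> t" "S (A#\<Gamma>) u"]
    by (simp add: tyof_eq Let_def wk_def)
qed

lemma sem_wk: "typing G t A \<Longrightarrow> S (B#G) (ren Suc t) = cmp M (S G t) (pi1 M (cx G) (tyo B))"
  by (rule sem_ren) auto

lemma sem_msubst:
  "typing D t A \<Longrightarrow> r \<in> Ar M \<Longrightarrow> sdom M r = cx G \<Longrightarrow> scod M r = cx D \<Longrightarrow>
   (\<forall>i<length D. typing G (f i) (D ! i) \<and> cmp M (var_sem M \<iota> D i) r = S G (f i)) \<Longrightarrow>
   S G (msubst f t) = cmp M (S D t) r"
proof (induction arbitrary: G f r rule: typing.induct)
  case (ty_var i \<Gamma>) then show ?case by simp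
next
  case (ty_unit \<Gamma>)
  have "cmp M (bang M (cx \<Gamma>)) r = bang M (cx G)" by (rule bang_uniq) (use ty_unit.prems in simp_all)
  then show ?case by simp
next
  case (ty_pair \<Gamma> t A u B) then show ?case by simp
next
  case (ty_fst \<Gamma> t A B)
  have "typing G (msubst f t) (TyProd A B)" using typing_msubst ty_fst by blast
  then show ?case using ty_fst by (simp add: tyof_eq)
next
  case (ty_snd \<Gamma> t A B)
  have "typing G (msubst f t) (TyProd A B)" using typing_msubst ty_snd by blast
  then show ?case using ty_snd by (simp add: tyof_eq)
next
  case (ty_app \<Gamma> t A B u)
  have "typing G (msubst f t) (TyArr A B)" using typing_msubst ty_app by blast
  then show ?case using ty_app by (simp add: tyof_eq)
next
  case (ty_lam A \<Gamma> t B)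
  have c: "\<forall>i<length (A#\<Gamma>). typing (A#G) (shs f i) ((A#\<Gamma>) ! i) \<and>
     cmp M (var_sem M \<iota> (A#\<Gamma>) i) (wk r G A) = S (A#G) (shs f i)"
  proof (intro allI impI conjI)
    fix i assume i: "i < length (A#\<Gamma>)"
    show "typing (A#G) (shs f i) ((A#\<Gamma>) ! i)" using shs_typed[of \<Gamma> G f A] ty_lam.prems i by auto
    show "cmp M (var_sem M \<iota> (A#\<Gamma>) i) (wk r G A) = S (A#G) (shs f i)"
    proof (cases i)
      case 0 then show ?thesis using ty_lam.prems wk_var0 by simp
    next
      case (Suc j)
      then have j: "j < length \<Gamma>" using i by simp
      then show ?thesis using Suc ty_lam.prems wk_varS[of r G \<Gamma> j A] sem_wk[of G "f j" "\<Gamma> ! j" A] by simp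
    qed
  qed
  have "S (A#G) (msubst (shs f) t) = cmp M (S (A#\<Gamma>) t) (wk r G A)"
    by (rule ty_lam.IH) (use ty_lam.prems c in simp_all)
  then show ?case using ty_lam lam_nat by simp
next
  case (ty_letmap \<Gamma> t A u B)
  have c: "\<forall>i<length (A#\<Gamma>). typing (A#G) (shs f i) ((A#\<Gamma>) ! i) \<and>
     cmp M (var_sem M \<iota> (A#\<Gamma>) i) (wk r G A) = S (A#G) (shs f i)"
  proof (intro allI impI conjI)
    fix i assume i: "i < length (A#\<Gamma>)"
    show "typing (A#G) (shs f i) ((A#\<Gamma>) ! i)" using shs_typed[of \<Gamma> G f A] ty_letmap.prems i by auto
    show "cmp M (var_sem M \<iota> (A#\<Gamma>) i) (wk r G A) = S (A#G) (shs f i)"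
    proof (cases i)
      case 0 then show ?thesis using ty_letmap.prems wk_var0 by simp
    next
      case (Suc j)
      then have j: "j < length \<Gamma>" using i by simp
      then show ?thesis using Suc ty_letmap.prems wk_varS[of r G \<Gamma> j A] sem_wk[of G "f j" "\<Gamma> ! j" A] by simp
    qed
  qed
  have u: "S (A#G) (msubst (shs f) u) = cmp M (S (A#\<Gamma>) u) (wk r G A)"
    by (rule ty_letmap.IH(2)) (use ty_letmap.prems c in simp_all)
  have t: "S G (msubst f t) = cmp M (S \<Gamma> t) r" by (rule ty_letmap.IH(1)) (use ty_letmap.prems in simp_all)
  have ty: "typing G (msubst f t) (TyDia A)" using typing_msubst ty_letmap by blast
  show ?case using ty_letmap ty t u letmap_nat[of r "cx G" "cx \<Gamma>" "tyo A" "S \<Gamma> t" "S (A#\<Gamma>) u"]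
    by (simp add: tyof_eq Let_def wk_def)
next
  case (ty_let \<Gamma> t A u B)
  have c: "\<forall>i<length (A#\<Gamma>). typing (A#G) (shs f i) ((A#\<Gamma>) ! i) \<and>
     cmp M (var_sem M \<iota> (A#\<Gamma>) i) (wk r G A) = S (A#G) (shs f i)"
  proof (intro allI impI conjI)
    fix i assume i: "i < length (A#\<Gamma>)"
    show "typing (A#G) (shs f i) ((A#\<Gamma>) ! i)" using shs_typed[of \<Gamma> G f A] ty_let.prems i by auto
    show "cmp M (var_sem M \<iota> (A#\<Gamma>) i) (wk r G A) = S (A#G) (shs f i)"
    proof (cases i)
      case 0 then show ?thesis using ty_let.prems wk_var0 by simp
    next
      case (Suc j)
      then have j: "j < length \<Gamma>" using i by simp
      then show ?thesis using Suc ty_let.prems wk_varS[of r G \<Gamma> j A] sem_wk[of G "f j" "\<Gamma> ! j" A] by simp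
    qed
  qed
  have u: "S (A#G) (msubst (shs f) u) = cmp M (S (A#\<Gamma>) u) (wk r G A)"
    by (rule ty_let.IH(2)) (use ty_let.prems c in simp_all)
  have t: "S G (msubst f t) = cmp M (S \<Gamma> t) r" by (rule ty_let.IH(1)) (use ty_let.prems in simp_all)
  have ty: "typing G (msubst f t) (TyDia A)" using typing_msubst ty_let by blast
  have tyu: "typing (A#G) (msubst (shs f) u) (TyDia B)" using typing_msubst[OF ty_let(2)] c by blast
  show ?case using ty_let ty tyu t u letmap_nat[of r "cx G" "cx \<Gamma>" "tyo A" "S \<Gamma> t" "S (A#\<Gamma>) u"]
    by (simp add: tyof_eq Let_def wk_def)
qed

lemma sem_subst0:
  assumes t: "typing (A#G) t B" and u: "typing G u A"
  shows "S G (subst 0 u t) = cmp M (S (A#G) t) (tup M (idm M (cx G)) (S G u))"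
  unfolding subst_msubst
proof (rule sem_msubst[OF t])
  show "\<forall>i<length (A#G). typing G (substf 0 u i) ((A#G) ! i) \<and>
      cmp M (var_sem M \<iota> (A#G) i) (tup M (idm M (cx G)) (S G u)) = S G (substf 0 u i)"
  proof (intro allI impI)
    fix i assume i: "i < length (A#G)"
    show "typing G (substf 0 u i) ((A#G) ! i) \<and>
      cmp M (var_sem M \<iota> (A#G) i) (tup M (idm M (cx G)) (S G u)) = S G (substf 0 u i)"
    proof (cases i)
      case 0 then show ?thesis using u by (simp add: substf_def)
    next
      case (Suc j) then show ?thesis using i u by (simp add: substf_def typing.ty_var)
    qed
  qed
qed (use u in simp_all)

lemma sem_lift0: "typing G t A \<Longrightarrow> S (B#G) (lift 0 t) = cmp M (S G t) (pi1 M (cx G) (tyo B))"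
  by (simp add: lift_ren liftr0 sem_wk)

lemma sem_lift1:
  assumes t: "typing (B#G) t A"
  shows "S (B#C#G) (lift 1 t) = cmp M (S (B#G) t)
     (tup M (cmp M (pi1 M (cx G) (tyo C)) (pi1 M (cx (C#G)) (tyo B))) (pi2 M (cx (C#G)) (tyo B)))"
  unfolding lift_ren
proof (rule sem_ren[OF t])
  show "\<forall>i<length (B#G). liftr 1 i < length (B#C#G) \<and> (B#C#G) ! liftr 1 i = (B#G) ! i \<and>
     cmp M (var_sem M \<iota> (B#G) i) (tup M (cmp M (pi1 M (cx G) (tyo C)) (pi1 M (cx (C#G)) (tyo B))) (pi2 M (cx (C#G)) (tyo B)))
       = var_sem M \<iota> (B#C#G) (liftr 1 i)"
  proof (intro allI impI)
    fix i assume i: "i < length (B#G)"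
    then show "liftr 1 i < length (B#C#G) \<and> (B#C#G) ! liftr 1 i = (B#G) ! i \<and>
     cmp M (var_sem M \<iota> (B#G) i) (tup M (cmp M (pi1 M (cx G) (tyo C)) (pi1 M (cx (C#G)) (tyo B))) (pi2 M (cx (C#G)) (tyo B)))
       = var_sem M \<iota> (B#C#G) (liftr 1 i)"
      by (cases i) (simp_all add: liftr_def)
  qed
qed simp_all

lemma sem_lift1': "typing (B#G) t A \<Longrightarrow> S (B#C#G) (lift (Suc 0) t) = cmp M (S (B#G) t)
     (tup M (cmp M (pi1 M (cx G) (tyo C)) (pi1 M (cx (C#G)) (tyo B))) (pi2 M (cx (C#G)) (tyo B)))"
  using sem_lift1 by simp

lemma sem_sl:
  assumes u: "typing (A#G) u B" and u': "typing (B#G) u' C"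
  shows "S (A#G) (subst 0 u (lift 1 u')) = cmp M (S (B#G) u') (tup M (pi1 M (cx G) (tyo A)) (S (A#G) u))"
proof -
  have "typing (B#A#G) (lift 1 u') C" using typing_lift1[OF u'] .
  then have "S (A#G) (subst 0 u (lift 1 u')) = cmp M (S (B#A#G) (lift 1 u')) (tup M (idm M (cx (A#G))) (S (A#G) u))"
    using sem_subst0 u by blast
  then show ?thesis using sem_lift1[OF u', of A] u u' by simp
qed

lemma sem_sl': "typing (A#G) u B \<Longrightarrow> typing (B#G) u' C \<Longrightarrow>
  S (A#G) (subst 0 u (lift (Suc 0) u')) = cmp M (S (B#G) u') (tup M (pi1 M (cx G) (tyo A)) (S (A#G) u))"
  using sem_sl by simp

lemma eqv_tyof: "eqv G t u A \<Longrightarrow> tyof G t = A \<and> tyof G u = A"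
  using eqv_typing tyof_eq by blast

lemma soundness: "eqv G t u A \<Longrightarrow> S G t = S G u"
proof (induction rule: eqv.induct)
  case (eq_refl \<Gamma> t A) then show ?case by simp
next
  case (eq_sym \<Gamma> t u A) then show ?case by simp
next
  case (eq_trans \<Gamma> t u A v) then show ?case by simp
next
  case (cg_pair \<Gamma> t t' A u u' B) then show ?case by simp
next
  case (cg_fst \<Gamma> t t' A B) then show ?case
    using eqv_tyof[OF cg_fst(1)] by simp
next
  case (cg_snd \<Gamma> t t' A B) then show ?case
    using eqv_tyof[OF cg_snd(1)] by simp
next
  case (cg_lam A \<Gamma> t t' B) then show ?case by simp
next
  case (cg_app \<Gamma> t t' A B u u') then show ?case
    using eqv_tyof[OF cg_app(1)] by simp
next
  case (cg_letmap \<Gamma> t t' A u u' B) then show ?case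
    using eqv_tyof[OF cg_letmap(1)] by simp
next
  case (cg_let \<Gamma> t t' A u u' B) then show ?case
    using eqv_tyof[OF cg_let(1)] eqv_tyof[OF cg_let(2)] by simp
next
  case (ax_unit_eta \<Gamma> t)
  have "S \<Gamma> t = bang M (cx \<Gamma>)" by (rule bang_uniq) (use ax_unit_eta in simp_all)
  then show ?case by simp
next
  case (ax_pair_eta \<Gamma> t A B) then show ?case
    using tup_eta[of "S \<Gamma> t" "tyo A" "tyo B"] by (simp add: tyof_eq[OF ax_pair_eta])
next
  case (ax_fst_beta \<Gamma> t A u B)
  then have tp: "typing \<Gamma> (TPair t u) (TyProd A B)" by (rule ty_pair)
  then show ?case using ax_fst_beta by (simp add: tyof_eq[OF tp])
next
  case (ax_snd_beta \<Gamma> t A u B)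
  then have tp: "typing \<Gamma> (TPair t u) (TyProd A B)" by (rule ty_pair)
  then show ?case using ax_snd_beta by (simp add: tyof_eq[OF tp])
next
  case (ax_fun_eta \<Gamma> t A B)
  have tl: "typing (A#\<Gamma>) (lift 0 t) (TyArr A B)" using typing_lift0 ax_fun_eta by blast
  have "cur M (cx \<Gamma>) (tyo A) (cmp M (evl M (tyo A) (tyo B)) (parr M (cx \<Gamma>) (tyo A) (S \<Gamma> t) (idm M (tyo A)))) = S \<Gamma> t"
    by (rule cur_uniq) (use ax_fun_eta in simp_all)
  then show ?case using tl ax_fun_eta by (simp add: tyof_eq[OF tl] sem_lift0 parr_def)
next
  case (ax_fun_beta A \<Gamma> t B u)
  have tl: "typing \<Gamma> (TLam A t) (TyArr A B)" using ax_fun_beta(1) by (rule ty_lam)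
  have e: "cmp M (evl M (tyo A) (tyo B)) (parr M (cx \<Gamma>) (tyo A) (cur M (cx \<Gamma>) (tyo A) (S (A#\<Gamma>) t)) (idm M (tyo A))) = S (A#\<Gamma>) t"
    by (rule evl_cur) (use ax_fun_beta in simp_all)
  have "cmp M (evl M (tyo A) (tyo B)) (cmp M (parr M (cx \<Gamma>) (tyo A) (cur M (cx \<Gamma>) (tyo A) (S (A#\<Gamma>) t)) (idm M (tyo A)))
     (tup M (idm M (cx \<Gamma>)) (S \<Gamma> u))) = cmp M (S (A#\<Gamma>) t) (tup M (idm M (cx \<Gamma>)) (S \<Gamma> u))"
    by (rule cmp_k[OF e]) (use ax_fun_beta in \<open>simp_all add: parr_def\<close>)
  then show ?case using tl ax_fun_beta by (simp add: tyof_eq[OF tl] sem_subst0 parr_def)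
next
  case (ax_letmap_id \<Gamma> t A)
  have e: "cmp M (Dar M (pi2 M (cx \<Gamma>) (tyo A))) (st M (cx \<Gamma>) (tyo A)) = pi2 M (cx \<Gamma>) (Dob M (tyo A))"
    by (rule st_pi2) simp_all
  have "cmp M (Dar M (pi2 M (cx \<Gamma>) (tyo A))) (cmp M (st M (cx \<Gamma>) (tyo A)) (tup M (idm M (cx \<Gamma>)) (S \<Gamma> t)))
     = cmp M (pi2 M (cx \<Gamma>) (Dob M (tyo A))) (tup M (idm M (cx \<Gamma>)) (S \<Gamma> t))"
    by (rule cmp_k[OF e]) (use ax_letmap_id in simp_all)
  then show ?case using ax_letmap_id by (simp add: tyof_eq[OF ax_letmap_id])
next
  case (ax_letmap_letmap \<Gamma> t A u B u' C)
  have t1: "typing \<Gamma> (TLetmap t u) (TyDia B)" using ax_letmap_letmap by (blast intro: ty_letmap)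
  have K: "cmp M (st M (cx \<Gamma>) (tyo B)) (tup M (idm M (cx \<Gamma>)) (cmp M (Dar M (S (A#\<Gamma>) u)) (cmp M (st M (cx \<Gamma>) (tyo A)) (tup M (idm M (cx \<Gamma>)) (S \<Gamma> t)))))
       = cmp M (Dar M (tup M (pi1 M (cx \<Gamma>) (tyo A)) (S (A#\<Gamma>) u))) (cmp M (st M (cx \<Gamma>) (tyo A)) (tup M (idm M (cx \<Gamma>)) (S \<Gamma> t)))"
    by (rule K1) (use ax_letmap_letmap in simp_all)
  then show ?case using ax_letmap_letmap t1 by (simp add: tyof_eq[OF ax_letmap_letmap(1)] tyof_eq[OF ax_letmap_letmap(2)] tyof_eq[OF ax_letmap_letmap(3)] tyof_eq[OF t1] sem_sl'[OF ax_letmap_letmap(2,3)] Let_def)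
next
  case (ax_let_letmap \<Gamma> t A u B u' C)
  have t1: "typing \<Gamma> (TLetmap t u) (TyDia B)" using ax_let_letmap by (blast intro: ty_letmap)
  have t2: "typing (A#\<Gamma>) (subst 0 u (lift 1 u')) (TyDia C)"
    using ax_let_letmap by (blast intro: typing_subst0 typing_lift1)
  have K: "cmp M (st M (cx \<Gamma>) (tyo B)) (tup M (idm M (cx \<Gamma>)) (cmp M (Dar M (S (A#\<Gamma>) u)) (cmp M (st M (cx \<Gamma>) (tyo A)) (tup M (idm M (cx \<Gamma>)) (S \<Gamma> t)))))
       = cmp M (Dar M (tup M (pi1 M (cx \<Gamma>) (tyo A)) (S (A#\<Gamma>) u))) (cmp M (st M (cx \<Gamma>) (tyo A)) (tup M (idm M (cx \<Gamma>)) (S \<Gamma> t)))"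
    by (rule K1) (use ax_let_letmap in simp_all)
  then show ?case using ax_let_letmap t1 t2 by (simp add: tyof_eq[OF ax_let_letmap(1)] tyof_eq[OF ax_let_letmap(2)] tyof_eq[OF ax_let_letmap(3)] tyof_eq[OF t1] tyof_eq[OF t2, simplified] sem_sl'[OF ax_let_letmap(2,3)] Let_def)
next
  case (ax_letmap_let \<Gamma> t A u B u' C)
  have t1: "typing \<Gamma> (TLet t u) (TyDia B)" using ax_letmap_let by (blast intro: ty_let)
  have t2: "typing (B#A#\<Gamma>) (lift 1 u') C" using ax_letmap_let by (blast intro: typing_lift1)
  have t3: "typing (A#\<Gamma>) (TLetmap u (lift 1 u')) (TyDia C)" using ax_letmap_let t2 by (blast intro: ty_letmap)
  have K: "cmp M (Dar M (S (B#\<Gamma>) u')) (cmp M (st M (cx \<Gamma>) (tyo B)) (tup M (idm M (cx \<Gamma>)) (cmp M (mu M (tyo B)) (cmp M (Dar M (S (A#\<Gamma>) u)) (cmp M (st M (cx \<Gamma>) (tyo A)) (tup M (idm M (cx \<Gamma>)) (S \<Gamma> t)))))))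
    = cmp M (mu M (tyo C)) (cmp M (Dar M (cmp M (Dar M (cmp M (S (B#\<Gamma>) u') (tup M (cmp M (pi1 M (cx \<Gamma>) (tyo A)) (pi1 M (prd M (cx \<Gamma>) (tyo A)) (tyo B))) (pi2 M (prd M (cx \<Gamma>) (tyo A)) (tyo B)))))
         (cmp M (st M (prd M (cx \<Gamma>) (tyo A)) (tyo B)) (tup M (idm M (prd M (cx \<Gamma>) (tyo A))) (S (A#\<Gamma>) u))))) (cmp M (st M (cx \<Gamma>) (tyo A)) (tup M (idm M (cx \<Gamma>)) (S \<Gamma> t))))"
    by (rule K2) (use ax_letmap_let in simp_all)
  show ?case using K ax_letmap_let t1 t2 t3 by (simp add: tyof_eq[OF ax_letmap_let(1)] tyof_eq[OF ax_letmap_let(2)] tyof_eq[OF ax_letmap_let(3)] tyof_eq[OF t1] tyof_eq[OF t2, simplified] tyof_eq[OF t3, simplified] sem_lift1'[OF ax_letmap_let(3)] Let_def)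
next
  case (ax_let_let \<Gamma> t A u B u' C)
  have t1: "typing \<Gamma> (TLet t u) (TyDia B)" using ax_let_let by (blast intro: ty_let)
  have t2: "typing (B#A#\<Gamma>) (lift 1 u') (TyDia C)" using ax_let_let by (blast intro: typing_lift1)
  have t3: "typing (A#\<Gamma>) (TLet u (lift 1 u')) (TyDia C)" using ax_let_let t2 by (blast intro: ty_let)
  have K: "cmp M (mu M (tyo C)) (cmp M (Dar M (S (B#\<Gamma>) u')) (cmp M (st M (cx \<Gamma>) (tyo B)) (tup M (idm M (cx \<Gamma>)) (cmp M (mu M (tyo B)) (cmp M (Dar M (S (A#\<Gamma>) u)) (cmp M (st M (cx \<Gamma>) (tyo A)) (tup M (idm M (cx \<Gamma>)) (S \<Gamma> t))))))))
    = cmp M (mu M (tyo C)) (cmp M (Dar M (cmp M (mu M (tyo C)) (cmp M (Dar M (cmp M (S (B#\<Gamma>) u') (tup M (cmp M (pi1 M (cx \<Gamma>) (tyo A)) (pi1 M (prd M (cx \<Gamma>) (tyo A)) (tyo B))) (pi2 M (prd M (cx \<Gamma>) (tyo A)) (tyo B)))))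
         (cmp M (st M (prd M (cx \<Gamma>) (tyo A)) (tyo B)) (tup M (idm M (prd M (cx \<Gamma>) (tyo A))) (S (A#\<Gamma>) u)))))) (cmp M (st M (cx \<Gamma>) (tyo A)) (tup M (idm M (cx \<Gamma>)) (S \<Gamma> t))))"
    by (rule K3) (use ax_let_let in simp_all)
  show ?case using K ax_let_let t1 t2 t3 by (simp add: tyof_eq[OF ax_let_let(1)] tyof_eq[OF ax_let_let(2)] tyof_eq[OF ax_let_let(3)] tyof_eq[OF t1] tyof_eq[OF t2, simplified] tyof_eq[OF t3, simplified] sem_lift1'[OF ax_let_let(3)] Let_def)
qed

end

instance ty :: countable by countable_datatype
instance tm :: countable by countable_datatype

definition sb :: "tm \<Rightarrow> nat \<Rightarrow> tm" where
  "sb f i = (case i of 0 \<Rightarrow> f | Suc j \<Rightarrow> TVar j)"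

lemma sb_0[simp]: "sb f 0 = f" and sb_Suc[simp]: "sb f (Suc j) = TVar j"
  by (simp_all add: sb_def)

definition canon :: "ty \<Rightarrow> ty \<Rightarrow> tm \<Rightarrow> tm" where
  "canon A B t = (SOME t'. eqv [A] t t' B)"

definition mor :: "ty \<Rightarrow> ty \<Rightarrow> tm \<Rightarrow> nat" where
  "mor A B t = to_nat (A, B, canon A B t)"

definition dm :: "nat \<Rightarrow> ty \<times> ty \<times> tm" where "dm m = from_nat m"
definition mdom where "mdom m = fst (dm m)"
definition mcod where "mcod m = fst (snd (dm m))"
definition mtm where "mtm m = snd (snd (dm m))"
definition ob :: "ty \<Rightarrow> nat" where "ob A = to_nat A"
definition tyn :: "nat \<Rightarrow> ty" where "tyn n = from_nat n"

lemma tyn_ob[simp]: "tyn (ob A) = A" by (simp add: tyn_def ob_def)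
lemma ob_inj[simp]: "ob A = ob B \<longleftrightarrow> A = B" by (simp add: ob_def)

lemma canon_eqv: "typing [A] t B \<Longrightarrow> eqv [A] t (canon A B t) B"
  unfolding canon_def by (rule someI[of _ t]) (rule eq_refl)

lemma canon_cong: "eqv [A] t t' B \<Longrightarrow> canon A B t = canon A B t'"
proof -
  assume e: "eqv [A] t t' B"
  have "(\<lambda>x. eqv [A] t x B) = (\<lambda>x. eqv [A] t' x B)"
    using e by (meson eq_sym eq_trans)
  then show ?thesis unfolding canon_def by simp
qed

lemma dm_mor[simp]: "dm (mor A B t) = (A, B, canon A B t)" by (simp add: dm_def mor_def)
lemma mdom_mor[simp]: "mdom (mor A B t) = A" by (simp add: mdom_def)
lemma mcod_mor[simp]: "mcod (mor A B t) = B" by (simp add: mcod_def)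
lemma mtm_mor[simp]: "mtm (mor A B t) = canon A B t" by (simp add: mtm_def)

lemma mor_eq_iff:
  assumes "typing [A] t B" "typing [A'] t' B'"
  shows "mor A B t = mor A' B' t' \<longleftrightarrow> A = A' \<and> B = B' \<and> eqv [A] t t' B"
proof
  assume "mor A B t = mor A' B' t'"
  then have e: "A = A'" "B = B'" "canon A B t = canon A B t'" by (auto simp: mor_def)
  have "eqv [A] t (canon A B t) B" using assms(1) by (rule canon_eqv)
  moreover have "eqv [A] t' (canon A B t') B" using assms(2) e by (simp add: canon_eqv)
  ultimately show "A = A' \<and> B = B' \<and> eqv [A] t t' B" using e by (metis eq_sym eq_trans)
qed (auto simp: mor_def canon_cong)

lemma mor_eqI: "eqv [A] t t' B \<Longrightarrow> mor A B t = mor A B t'"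
  by (simp add: mor_def canon_cong)

definition TM :: "(nat, nat) sj_model" where
  "TM = \<lparr> Ob = range ob, Ar = {mor A B t | A B t. typing [A] t B},
     sdom = (\<lambda>m. ob (mdom m)), scod = (\<lambda>m. ob (mcod m)),
     idm = (\<lambda>X. mor (tyn X) (tyn X) (TVar 0)),
     cmp = (\<lambda>g f. mor (mdom f) (mcod g) (msubst (sb (mtm f)) (mtm g))),
     trm = ob TyUnit, bang = (\<lambda>X. mor (tyn X) TyUnit TUnit),
     prd = (\<lambda>X Y. ob (TyProd (tyn X) (tyn Y))),
     pi1 = (\<lambda>X Y. mor (TyProd (tyn X) (tyn Y)) (tyn X) (TFst (TVar 0))),
     pi2 = (\<lambda>X Y. mor (TyProd (tyn X) (tyn Y)) (tyn Y) (TSnd (TVar 0))),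
     tup = (\<lambda>f g. mor (mdom f) (TyProd (mcod f) (mcod g)) (TPair (mtm f) (mtm g))),
     expo = (\<lambda>X Y. ob (TyArr (tyn X) (tyn Y))),
     evl = (\<lambda>X Y. mor (TyProd (TyArr (tyn X) (tyn Y)) (tyn X)) (tyn Y) (TApp (TFst (TVar 0)) (TSnd (TVar 0)))),
     cur = (\<lambda>Z X f. mor (tyn Z) (TyArr (tyn X) (mcod f))
               (TLam (tyn X) (msubst (sb (TPair (TVar (Suc 0)) (TVar 0))) (mtm f)))),
     Dob = (\<lambda>X. ob (TyDia (tyn X))),
     Dar = (\<lambda>f. mor (TyDia (mdom f)) (TyDia (mcod f)) (TLetmap (TVar 0) (msubst (sb (TVar 0)) (mtm f)))),
     st = (\<lambda>X Y. mor (TyProd (tyn X) (TyDia (tyn Y))) (TyDia (TyProd (tyn X) (tyn Y)))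
               (TLetmap (TSnd (TVar 0)) (TPair (TFst (TVar (Suc 0))) (TVar 0)))),
     mu = (\<lambda>X. mor (TyDia (TyDia (tyn X))) (TyDia (tyn X)) (TLet (TVar 0) (TVar 0))) \<rparr>"

lemma TM_simps[simp]:
  "Ob TM = range ob" "Ar TM = {mor A B t | A B t. typing [A] t B}"
  "sdom TM m = ob (mdom m)" "scod TM m = ob (mcod m)"
  "idm TM X = mor (tyn X) (tyn X) (TVar 0)"
  "trm TM = ob TyUnit" "bang TM X = mor (tyn X) TyUnit TUnit"
  "prd TM X Y = ob (TyProd (tyn X) (tyn Y))"
  "pi1 TM X Y = mor (TyProd (tyn X) (tyn Y)) (tyn X) (TFst (TVar 0))"
  "pi2 TM X Y = mor (TyProd (tyn X) (tyn Y)) (tyn Y) (TSnd (TVar 0))"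
  "expo TM X Y = ob (TyArr (tyn X) (tyn Y))"
  "evl TM X Y = mor (TyProd (TyArr (tyn X) (tyn Y)) (tyn X)) (tyn Y) (TApp (TFst (TVar 0)) (TSnd (TVar 0)))"
  "Dob TM X = ob (TyDia (tyn X))"
  "st TM X Y = mor (TyProd (tyn X) (TyDia (tyn Y))) (TyDia (TyProd (tyn X) (tyn Y)))
               (TLetmap (TSnd (TVar 0)) (TPair (TFst (TVar (Suc 0))) (TVar 0)))"
  "mu TM X = mor (TyDia (TyDia (tyn X))) (TyDia (tyn X)) (TLet (TVar 0) (TVar 0))"
  by (simp_all add: TM_def)

lemma typing_msubst1: "typing [B] g C \<Longrightarrow> typing G (s 0) B \<Longrightarrow> typing G (msubst s g) C"
  by (erule typing_msubst) simp

lemma eqv_msubst1: "typing [B] g C \<Longrightarrow> eqv G (s 0) (s' 0) B \<Longrightarrow> eqv G (msubst s g) (msubst s' g) C"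
  by (erule eqv_msubst_pw) simp

lemma eqv_msubst1': "eqv [B] g g' C \<Longrightarrow> eqv G (s 0) (s' 0) B \<Longrightarrow> eqv G (msubst s g) (msubst s' g') C"
  by (erule eqv_msubst2) simp

lemma typing_ext: "typing [B] g C \<Longrightarrow> typing (B#G) g C"
  using typing_msubst1[of B g C "B#G" TVar] by (simp add: typing_var0)

lemma eqv_msubst_id: "typing [B] g C \<Longrightarrow> eqv (B#G) (s 0) (TVar 0) B \<Longrightarrow> eqv (B#G) (msubst s g) g C"
  using eqv_msubst1[of B g C "B#G" s TVar] by simp

lemma typing_var1: "typing (A#B#G) (TVar (Suc 0)) B"
  using typing.ty_var[of "Suc 0" "A#B#G"] by simp

lemma typing_var2: "typing (A#B#C#G) (TVar (Suc (Suc 0))) C"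
  using typing.ty_var[of "Suc (Suc 0)" "A#B#C#G"] by simp

lemmas tyI = typing.intros typing_var0 typing_var1 typing_var2 typing_msubst1 typing_ext

lemma mor_ar: "typing [A] t B \<Longrightarrow> mor A B t \<in> Ar TM" by auto

lemma canon_typing: "typing [A] t B \<Longrightarrow> typing [A] (canon A B t) B"
  using canon_eqv eqv_typing by blast

lemma cmp_mor:
  assumes f: "typing [A] f B" and g: "typing [B] g C"
  shows "cmp TM (mor B C g) (mor A B f) = mor A C (msubst (sb f) g)"
proof -
  have "cmp TM (mor B C g) (mor A B f) = mor A C (msubst (sb (canon A B f)) (canon B C g))"
    by (simp add: TM_def)
  also have "\<dots> = mor A C (msubst (sb f) g)"
    by (rule mor_eqI, rule eqv_msubst1'[where B=B]) (use f g in \<open>simp_all add: canon_eqv eq_sym\<close>)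
  finally show ?thesis .
qed

lemma tup_mor:
  assumes f: "typing [A] f B" and g: "typing [A] g C"
  shows "tup TM (mor A B f) (mor A C g) = mor A (TyProd B C) (TPair f g)"
proof -
  have "tup TM (mor A B f) (mor A C g) = mor A (TyProd B C) (TPair (canon A B f) (canon A C g))"
    by (simp add: TM_def)
  also have "\<dots> = mor A (TyProd B C) (TPair f g)"
    by (rule mor_eqI, rule cg_pair) (use f g in \<open>simp_all add: canon_eqv eq_sym\<close>)
  finally show ?thesis .
qed

lemma cur_mor:
  assumes f: "typing [TyProd Z X] f Y"
  shows "cur TM (ob Z) (ob X) (mor (TyProd Z X) Y f) = mor Z (TyArr X Y) (TLam X (msubst (sb (TPair (TVar (Suc 0)) (TVar 0))) f))"
proof -
  have "cur TM (ob Z) (ob X) (mor (TyProd Z X) Y f) = mor Z (TyArr X Y) (TLam X (msubst (sb (TPair (TVar (Suc 0)) (TVar 0))) (canon (TyProd Z X) Y f)))"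
    by (simp add: TM_def)
  also have "\<dots> = mor Z (TyArr X Y) (TLam X (msubst (sb (TPair (TVar (Suc 0)) (TVar 0))) f))"
    apply (rule mor_eqI, rule cg_lam, rule eqv_msubst1'[where B="TyProd Z X"])
     apply (simp add: f canon_eqv eq_sym)
    apply (simp, rule eqv_refl, rule ty_pair, rule typing_var1, rule typing_var0)
    done
  finally show ?thesis .
qed

lemma Dar_mor:
  assumes f: "typing [A] f B"
  shows "Dar TM (mor A B f) = mor (TyDia A) (TyDia B) (TLetmap (TVar 0) (msubst (sb (TVar 0)) f))"
proof -
  have "Dar TM (mor A B f) = mor (TyDia A) (TyDia B) (TLetmap (TVar 0) (msubst (sb (TVar 0)) (canon A B f)))"
    by (simp add: TM_def)
  also have "\<dots> = mor (TyDia A) (TyDia B) (TLetmap (TVar 0) (msubst (sb (TVar 0)) f))"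
    apply (rule mor_eqI, rule cg_letmap, rule eqv_refl, rule typing_var0, rule eqv_msubst1'[where B=A])
     apply (simp add: f canon_eqv eq_sym)
    apply (simp, rule eqv_refl, rule typing_var0)
    done
  finally show ?thesis .
qed

lemma homE:
  assumes "f \<in> hom TM X Y"
  obtains A B t where "f = mor A B t" "typing [A] t B" "X = ob A" "Y = ob B"
  using assms by (auto simp: hom_def)

lemma hom_mor[simp]: "typing [A] t B \<Longrightarrow> mor A B t \<in> hom TM (ob A) (ob B)"
  by (auto simp: hom_def)

lemma ObE: assumes "X \<in> Ob TM" obtains A where "X = ob A" using assms by auto

lemma idm_ob[simp]: "idm TM (ob A) = mor A A (TVar 0)" by simp

lemma TM_category: "is_category TM"
  unfolding is_category_def
proof (intro conjI allI ballI impI)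
  fix f assume "f \<in> Ar TM" then show "sdom TM f \<in> Ob TM" "scod TM f \<in> Ob TM" by auto
next
  fix X assume "X \<in> Ob TM" then obtain A where "X = ob A" by (rule ObE)
  then show "idm TM X \<in> hom TM X X" using typing_var0[of A "[]"] by simp
next
  fix A B C f g assume f: "f \<in> hom TM A B" and g: "g \<in> hom TM B C"
  from f obtain A1 B1 t where 1: "f = mor A1 B1 t" "typing [A1] t B1" "A = ob A1" "B = ob B1" by (rule homE)
  from g obtain B2 C2 u where 2: "g = mor B2 C2 u" "typing [B2] u C2" "B = ob B2" "C = ob C2" by (rule homE)
  have "B1 = B2" using 1 2 by simp
  then show "cmp TM g f \<in> hom TM A C" using 1 2 by (simp add: cmp_mor typing_msubst1)
next
  fix A B f assume f: "f \<in> hom TM A B"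
  from f obtain A1 B1 t where 1: "f = mor A1 B1 t" "typing [A1] t B1" "A = ob A1" "B = ob B1" by (rule homE)
  have "mor A1 B1 (msubst (sb (TVar 0)) t) = mor A1 B1 t"
    by (rule mor_eqI, rule eqv_msubst_id[where G="[]"]) (use 1 in \<open>simp_all add: eqv_refl typing_var0\<close>)
  moreover have "typing [A1] (TVar 0) A1" by (rule typing_var0)
  ultimately show "cmp TM f (idm TM A) = f" "cmp TM (idm TM B) f = f"
    using 1 typing_var0[of B1 "[]"] by (simp_all add: cmp_mor)
next
  fix A B C D f g h assume f: "f \<in> hom TM A B" and g: "g \<in> hom TM B C" and h: "h \<in> hom TM C D"
  from f obtain A1 B1 t where 1: "f = mor A1 B1 t" "typing [A1] t B1" "A = ob A1" "B = ob B1" by (rule homE)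
  from g obtain B2 C2 u where 2: "g = mor B2 C2 u" "typing [B2] u C2" "B = ob B2" "C = ob C2" by (rule homE)
  from h obtain C3 D3 v where 3: "h = mor C3 D3 v" "typing [C3] v D3" "C = ob C3" "D = ob D3" by (rule homE)
  have e: "B1 = B2" "C2 = C3" using 1 2 3 by simp_all
  have tu: "typing [A1] (msubst (sb t) u) C2" using 1 2 e by (simp add: typing_msubst1)
  have tv: "typing [B2] (msubst (sb u) v) D3" using 2 3 e by (simp add: typing_msubst1)
  have "mor A1 D3 (msubst (sb (msubst (sb t) u)) v) = mor A1 D3 (msubst (sb t) (msubst (sb u) v))"
    by (rule mor_eqI) (use 1 2 3 e tu in \<open>simp add: msubst_msubst eqv_msubst1 eqv_refl\<close>)
  then show "cmp TM h (cmp TM g f) = cmp TM (cmp TM h g) f"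
    using 1 2 3 e tu tv by (simp add: cmp_mor)
qed

lemma TM_terminal: "has_terminal TM"
  unfolding has_terminal_def
proof (intro conjI ballI)
  show "trm TM \<in> Ob TM" by simp
next
  fix X assume "X \<in> Ob TM" then obtain A where A: "X = ob A" by (rule ObE)
  show "bang TM X \<in> hom TM X (trm TM)" using A typing.ty_unit[of "[A]"] hom_mor by fastforce
next
  fix X f assume "X \<in> Ob TM" "f \<in> hom TM X (trm TM)"
  then obtain A1 B1 t where 1: "f = mor A1 B1 t" "typing [A1] t B1" "X = ob A1" "trm TM = ob B1" by (meson homE)
  then have "B1 = TyUnit" by auto
  then show "f = bang TM X" using 1 by (simp add: mor_eqI ax_unit_eta)
qed

lemma TM_products: "has_products TM"
  unfolding has_products_def
proof (intro conjI ballI allI impI)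
  fix X Y assume "X \<in> Ob TM" "Y \<in> Ob TM"
  then obtain A B where A: "X = ob A" and B: "Y = ob B" by (meson ObE)
  have v: "typing [TyProd A B] (TVar 0) (TyProd A B)" by (rule typing_var0)
  have tf1: "typing [TyProd A B] (TFst (TVar 0)) A" by (rule ty_fst[OF v])
  have tf2: "typing [TyProd A B] (TSnd (TVar 0)) B" by (rule ty_snd[OF v])
  show "prd TM X Y \<in> Ob TM" by simp
  show "pi1 TM X Y \<in> hom TM (prd TM X Y) X" using A B v hom_mor ty_fst by fastforce
  show "pi2 TM X Y \<in> hom TM (prd TM X Y) Y" using A B v hom_mor ty_snd by fastforce
  {
    fix C f g assume f: "f \<in> hom TM C X" and g: "g \<in> hom TM C Y"
    from f obtain C1 A1 t where 1: "f = mor C1 A1 t" "typing [C1] t A1" "C = ob C1" "X = ob A1" by (rule homE)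
    from g obtain C2 B2 u where 2: "g = mor C2 B2 u" "typing [C2] u B2" "C = ob C2" "Y = ob B2" by (rule homE)
    have e: "A1 = A" "B2 = B" "C2 = C1" using 1 2 A B by auto
    have tp: "typing [C1] (TPair t u) (TyProd A B)" using 1 2 e by (simp add: ty_pair)
    show "tup TM f g \<in> hom TM C (prd TM X Y)" using 1 2 e A B tp by (simp add: tup_mor)
    show "cmp TM (pi1 TM X Y) (tup TM f g) = f"
      using 1 2 e A B tp cmp_mor[OF tp tf1] mor_eqI[OF ax_fst_beta[of "[C1]" t A u B]] by (simp add: tup_mor)
    show "cmp TM (pi2 TM X Y) (tup TM f g) = g"
      using 1 2 e A B tp cmp_mor[OF tp tf2] mor_eqI[OF ax_snd_beta[of "[C1]" t A u B]] by (simp add: tup_mor)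
  }
  {
    fix C h assume h: "h \<in> hom TM C (prd TM X Y)"
    from h obtain C1 P w where 1: "h = mor C1 P w" "typing [C1] w P" "C = ob C1" "prd TM X Y = ob P" by (rule homE)
    have e: "P = TyProd A B" using 1 A B by simp
    have "mor C1 (TyProd A B) w = mor C1 (TyProd A B) (TPair (TFst w) (TSnd w))"
      using 1 e by (simp add: mor_eqI ax_pair_eta)
    then show "h = tup TM (cmp TM (pi1 TM X Y) h) (cmp TM (pi2 TM X Y) h)"
      using 1 e A B cmp_mor[OF _ tf1, of C1 w] cmp_mor[OF _ tf2, of C1 w] tup_mor[of C1 "TFst w" A "TSnd w" B]
      by (simp add: ty_fst ty_snd)
  }
qed

lemma parr_mor:
  assumes w: "typing [C] w D"
  shows "parr TM (ob C) (ob A) (mor C D w) (idm TM (ob A))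
     = mor (TyProd C A) (TyProd D A) (TPair (msubst (sb (TFst (TVar 0))) w) (TSnd (TVar 0)))"
proof -
  have v: "typing [TyProd C A] (TVar 0) (TyProd C A)" by (rule typing_var0)
  have tf1: "typing [TyProd C A] (TFst (TVar 0)) C" by (rule ty_fst[OF v])
  have tf2: "typing [TyProd C A] (TSnd (TVar 0)) A" by (rule ty_snd[OF v])
  have a: "typing [A] (TVar 0) A" by (rule typing_var0)
  have b: "typing [TyProd C A] (msubst (sb (TFst (TVar 0))) w) D" using w tf1 by (simp add: typing_msubst1)
  show ?thesis unfolding parr_def
    using cmp_mor[OF tf1 w] cmp_mor[OF tf2 a] tup_mor[OF b tf2] by simp
qed

lemma evl_parr:
  assumes w: "typing [C] w (TyArr A B)"
  shows "cmp TM (evl TM (ob A) (ob B)) (parr TM (ob C) (ob A) (mor C (TyArr A B) w) (idm TM (ob A)))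
     = mor (TyProd C A) B (TApp (msubst (sb (TFst (TVar 0))) w) (TSnd (TVar 0)))"
proof -
  have v: "typing [TyProd C A] (TVar 0) (TyProd C A)" by (rule typing_var0)
  have tf1: "typing [TyProd C A] (TFst (TVar 0)) C" by (rule ty_fst[OF v])
  have tf2: "typing [TyProd C A] (TSnd (TVar 0)) A" by (rule ty_snd[OF v])
  have b: "typing [TyProd C A] (msubst (sb (TFst (TVar 0))) w) (TyArr A B)" using w tf1 by (simp add: typing_msubst1)
  have p: "typing [TyProd C A] (TPair (msubst (sb (TFst (TVar 0))) w) (TSnd (TVar 0))) (TyProd (TyArr A B) A)"
    using b tf2 by (rule ty_pair)
  have v2: "typing [TyProd (TyArr A B) A] (TVar 0) (TyProd (TyArr A B) A)" by (rule typing_var0)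
  have e: "typing [TyProd (TyArr A B) A] (TApp (TFst (TVar 0)) (TSnd (TVar 0))) B"
    using v2 by (blast intro: ty_app ty_fst ty_snd)
  have "eqv [TyProd C A] (TApp (TFst (TPair (msubst (sb (TFst (TVar 0))) w) (TSnd (TVar 0))))
                                (TSnd (TPair (msubst (sb (TFst (TVar 0))) w) (TSnd (TVar 0)))))
        (TApp (msubst (sb (TFst (TVar 0))) w) (TSnd (TVar 0))) B"
    by (rule cg_app, rule ax_fst_beta, rule b, rule tf2, rule ax_snd_beta, rule b, rule tf2)
  then show ?thesis using parr_mor[OF w, of A] cmp_mor[OF p e] by (simp add: mor_eqI)
qed

lemma TM_exponentials: "has_exponentials TM"
  unfolding has_exponentials_def
proof (intro conjI ballI allI impI)
  fix X Y assume "X \<in> Ob TM" "Y \<in> Ob TM"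
  then obtain A B where A: "X = ob A" and B: "Y = ob B" by (meson ObE)
  have v2: "typing [TyProd (TyArr A B) A] (TVar 0) (TyProd (TyArr A B) A)" by (rule typing_var0)
  have e: "typing [TyProd (TyArr A B) A] (TApp (TFst (TVar 0)) (TSnd (TVar 0))) B"
    using v2 by (blast intro: ty_app ty_fst ty_snd)
  show "expo TM X Y \<in> Ob TM" by simp
  show "evl TM X Y \<in> hom TM (prd TM (expo TM X Y) X) Y" using A B e hom_mor by fastforce
  {
    fix Z f assume "Z \<in> Ob TM" "f \<in> hom TM (prd TM Z X) Y"
    then obtain C where C: "Z = ob C" by (meson ObE)
    from \<open>f \<in> hom TM (prd TM Z X) Y\<close> obtain P Q t where 1: "f = mor P Q t" "typing [P] t Q" "prd TM Z X = ob P" "Y = ob Q"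
      by (rule homE)
    have eq: "P = TyProd C A" "Q = B" using 1 A B C by auto
    have t: "typing [TyProd C A] t B" using 1 eq by simp
    let ?body = "msubst (sb (TPair (TVar (Suc 0)) (TVar 0))) t"
    have tb: "typing [A, C] ?body B"
      by (rule typing_msubst1[OF t]) (simp, rule ty_pair, rule typing_var1, rule typing_var0)
    have tl: "typing [C] (TLam A ?body) (TyArr A B)" using tb by (rule ty_lam)
    have cur: "cur TM Z X f = mor C (TyArr A B) (TLam A ?body)"
      using cur_mor[OF t] 1 eq A C by simp
    show "cur TM Z X f \<in> hom TM Z (expo TM X Y)" using cur tl A B C by simp
    let ?L = "msubst (sb (TFst (TVar 0))) (TLam A ?body)"
    have tL: "typing [TyProd C A] ?L (TyArr A B)"
      by (rule typing_msubst1[OF tl]) (simp, rule ty_fst, rule typing_var0)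
    have tsnd: "typing [TyProd C A] (TSnd (TVar 0)) A" by (rule ty_snd, rule typing_var0)
    define body' where "body' = msubst (shs (sb (TFst (TVar 0)))) ?body"
    have L: "?L = TLam A body'" by (simp add: body'_def)
    have tb': "typing [A, TyProd C A] body' B" using tL L by (auto elim: tyLamE)
    have s1: "eqv [TyProd C A] (TApp ?L (TSnd (TVar 0))) (subst 0 (TSnd (TVar 0)) body') B"
      unfolding L by (rule ax_fun_beta[OF tb' tsnd])
    have s2: "eqv [TyProd C A] (subst 0 (TSnd (TVar 0)) body') t B"
    proof -
      have "subst 0 (TSnd (TVar 0)) body' = msubst (\<lambda>i. msubst (substf 0 (TSnd (TVar 0))) (msubst (shs (sb (TFst (TVar 0)))) (sb (TPair (TVar (Suc 0)) (TVar 0)) i))) t"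
        by (simp add: body'_def subst_msubst msubst_msubst)
      also have "eqv [TyProd C A] \<dots> t B"
        by (rule eqv_msubst_id[where G="[]", OF t]) (simp add: substf_def, rule eq_sym, rule ax_pair_eta, rule typing_var0)
      finally show ?thesis .
    qed
    show "cmp TM (evl TM X Y) (parr TM Z X (cur TM Z X f) (idm TM X)) = f"
      using evl_parr[OF tl] cur A B C 1 eq mor_eqI[OF eq_trans[OF s1 s2]] by simp
  }
  {
    fix Z h assume "Z \<in> Ob TM" "h \<in> hom TM Z (expo TM X Y)"
    then obtain C where C: "Z = ob C" by (meson ObE)
    from \<open>h \<in> hom TM Z (expo TM X Y)\<close> obtain P Q w where 1: "h = mor P Q w" "typing [P] w Q" "Z = ob P" "expo TM X Y = ob Q"
      by (rule homE)
    have eq: "P = C" "Q = TyArr A B" using 1 A B C by auto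
    have w: "typing [C] w (TyArr A B)" using 1 eq by simp
    let ?E = "TApp (msubst (sb (TFst (TVar 0))) w) (TSnd (TVar 0))"
    have tE: "typing [TyProd C A] ?E B"
      by (rule ty_app, rule typing_msubst1[OF w], simp, rule ty_fst, rule typing_var0, rule ty_snd, rule typing_var0)
    have c: "cur TM Z X (cmp TM (evl TM X Y) (parr TM Z X h (idm TM X)))
        = mor C (TyArr A B) (TLam A (msubst (sb (TPair (TVar (Suc 0)) (TVar 0))) ?E))"
      using evl_parr[OF w] cur_mor[OF tE] 1 eq A B C by simp
    have tp: "typing [A, C] (TPair (TVar (Suc 0)) (TVar 0)) (TyProd C A)"
      by (rule ty_pair, rule typing_var1, rule typing_var0)
    have "eqv [C] (TLam A (msubst (sb (TPair (TVar (Suc 0)) (TVar 0))) ?E)) (TLam A (TApp (lift 0 w) (TVar 0))) (TyArr A B)"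
    proof (rule cg_lam, simp add: msubst_msubst, rule cg_app)
      show "eqv [A, C] (msubst (\<lambda>i. msubst (sb (TPair (TVar (Suc 0)) (TVar 0))) (sb (TFst (TVar 0)) i)) w) (lift 0 w) (TyArr A B)"
        unfolding lift_ren ren_as_msubst liftr0
        by (rule eqv_msubst1[OF w]) (simp, rule ax_fst_beta, rule typing_var1, rule typing_var0)
      show "eqv [A, C] (TSnd (TPair (TVar (Suc 0)) (TVar 0))) (TVar 0) A"
        by (rule ax_snd_beta, rule typing_var1, rule typing_var0)
    qed
    then show "cur TM Z X (cmp TM (evl TM X Y) (parr TM Z X h (idm TM X))) = h"
      using c 1 eq mor_eqI[OF eq_trans[OF _ eq_sym[OF ax_fun_eta[OF w]]]] by (simp add: msubst_msubst)
  }
qed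

declare eq_trans[trans]

lemma msub_cmp:
  assumes "typing [B] g C" "typing G (s 0) B" "s 0 = s' 0" shows "eqv G (msubst s g) (msubst s' g) C"
proof (rule eqv_msubst1[OF assms(1)])
  show "eqv G (s 0) (s' 0) B" using eq_refl[OF assms(2)] assms(3) by simp
qed

lemmas msimps = subst_msubst lift_ren msubst_msubst msubst_ren ren_msubst substf_def liftr_def comp_def

lemma Dob_ob[simp]: "Dob TM (ob A) = ob (TyDia A)" by simp

lemma TM_functor: "is_endofunctor TM"
  unfolding is_endofunctor_def
proof (intro conjI ballI allI impI)
  fix X assume "X \<in> Ob TM" then obtain A where A: "X = ob A" by (rule ObE)
  show "Dob TM X \<in> Ob TM" by simp
  have v: "typing [A] (TVar 0) A" by (rule typing_var0)
  have "Dar TM (mor A A (TVar 0)) = mor (TyDia A) (TyDia A) (TLetmap (TVar 0) (TVar 0))"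
    using Dar_mor[OF v] by simp
  also have "\<dots> = mor (TyDia A) (TyDia A) (TVar 0)"
    by (rule mor_eqI, rule eq_sym, rule ax_letmap_id, rule typing_var0)
  finally show "Dar TM (idm TM X) = idm TM (Dob TM X)" using A by simp
next
  fix X Y f assume "f \<in> hom TM X Y"
  then obtain A B t where 1: "f = mor A B t" "typing [A] t B" "X = ob A" "Y = ob B" by (rule homE)
  have "typing [TyDia A] (TLetmap (TVar 0) (msubst (sb (TVar 0)) t)) (TyDia B)"
    by (rule ty_letmap, rule typing_var0, rule typing_msubst1[OF 1(2)], simp, rule typing_var0)
  then show "Dar TM f \<in> hom TM (Dob TM X) (Dob TM Y)" using 1 Dar_mor by simp
next
  fix X Y Z f g assume "f \<in> hom TM X Y" "g \<in> hom TM Y Z"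
  then obtain A B t B' C u where 1: "f = mor A B t" "typing [A] t B" "X = ob A" "Y = ob B"
    and 2: "g = mor B' C u" "typing [B'] u C" "Y = ob B'" "Z = ob C" by (meson homE)
  have e: "B' = B" using 1 2 by simp
  have t: "typing [A] t B" and u: "typing [B] u C" using 1 2 e by simp_all
  let ?Lt = "TLetmap (TVar 0) (msubst (sb (TVar 0)) t)" and ?Lu = "TLetmap (TVar 0) (msubst (sb (TVar 0)) u)"
  have tt: "typing [A, TyDia A] (msubst (sb (TVar 0)) t) B"
    by (rule typing_msubst1[OF t], simp, rule typing_var0)
  have tLt: "typing [TyDia A] ?Lt (TyDia B)" by (rule ty_letmap, rule typing_var0, rule tt)
  have tLu: "typing [TyDia B] ?Lu (TyDia C)"
    by (rule ty_letmap, rule typing_var0, rule typing_msubst1[OF u], simp, rule typing_var0)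
  have tu': "typing [B, TyDia A] (msubst (shs (sb ?Lt)) (msubst (sb (TVar 0)) u)) C"
    by (simp add: msubst_msubst, rule typing_msubst1[OF u], simp, rule typing_var0)
  have "eqv [TyDia A] (msubst (sb ?Lt) ?Lu) (TLetmap (TVar 0) (subst 0 (msubst (sb (TVar 0)) t) (lift 1 (msubst (shs (sb ?Lt)) (msubst (sb (TVar 0)) u))))) (TyDia C)"
    by (simp only: msubst.simps sb_0, rule ax_letmap_letmap, rule typing_var0, rule tt, rule tu')
  also have "eqv [TyDia A] (TLetmap (TVar 0) (subst 0 (msubst (sb (TVar 0)) t) (lift 1 (msubst (shs (sb ?Lt)) (msubst (sb (TVar 0)) u))))) (TLetmap (TVar 0) (msubst (sb (TVar 0)) (msubst (sb t) u))) (TyDia C)"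
    apply (rule cg_letmap, rule eqv_refl, rule typing_var0)
    apply (simp add: msimps)
    apply (rule msub_cmp[OF u])
     apply simp_all
    apply (rule typing_msubst1[OF t], simp, rule typing_var0)
    done
  finally have "eqv [TyDia A] (msubst (sb ?Lt) ?Lu) (TLetmap (TVar 0) (msubst (sb (TVar 0)) (msubst (sb t) u))) (TyDia C)" .
  then show "Dar TM (cmp TM g f) = cmp TM (Dar TM g) (Dar TM f)"
    using 1 2 e Dar_mor[OF t] Dar_mor[OF u] cmp_mor[OF t u] cmp_mor[OF tLt tLu]
      Dar_mor[OF typing_msubst1[OF u], of A "sb t"] mor_eqI
    by (simp add: eq_sym)
qed

fun nstep :: "tm \<Rightarrow> tm" where
  "nstep (TVar i) = TVar i"
| "nstep TUnit = TUnit"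
| "nstep (TPair t u) = TPair (nstep t) (nstep u)"
| "nstep (TFst t) = (case nstep t of TPair a b \<Rightarrow> a | _ \<Rightarrow> TFst (nstep t))"
| "nstep (TSnd t) = (case nstep t of TPair a b \<Rightarrow> b | _ \<Rightarrow> TSnd (nstep t))"
| "nstep (TLam A t) = TLam A t"
| "nstep (TApp t u) = TApp (nstep t) (nstep u)"
| "nstep (TLetmap t u) = (case nstep t of
      TLetmap t1 u1 \<Rightarrow> TLetmap t1 (subst 0 u1 (lift 1 (nstep u)))
    | TLet t1 u1 \<Rightarrow> TLet t1 (TLetmap u1 (lift 1 (nstep u)))
    | _ \<Rightarrow> (if nstep u = TVar 0 then nstep t else TLetmap (nstep t) (nstep u)))"
| "nstep (TLet t u) = (case nstep t of
      TLetmap t1 u1 \<Rightarrow> TLet t1 (subst 0 u1 (lift 1 (nstep u)))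
    | TLet t1 u1 \<Rightarrow> TLet t1 (TLet u1 (lift 1 (nstep u)))
    | _ \<Rightarrow> TLet (nstep t) (nstep u))"

lemma nstep_sound: "typing G t A \<Longrightarrow> eqv G t (nstep t) A"
proof (induction rule: typing.induct)
  case (ty_var i \<Gamma>) then show ?case by (simp add: eqv_refl typing.ty_var)
next
  case (ty_unit \<Gamma>) then show ?case by (simp add: eqv_refl typing.ty_unit)
next
  case (ty_pair \<Gamma> t A u B) then show ?case by (simp add: cg_pair)
next
  case (ty_fst \<Gamma> t A B)
  have c: "eqv \<Gamma> (TFst t) (TFst (nstep t)) A" by (rule cg_fst[OF ty_fst.IH])
  show ?case
  proof (cases "nstep t")
    case (TPair a b)
    have "typing \<Gamma> (TPair a b) (TyProd A B)" using eqv_typing[OF ty_fst.IH] TPair by simp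
    then have ab: "typing \<Gamma> a A" "typing \<Gamma> b B" by (auto elim: tyPairE)
    have "eqv \<Gamma> (TFst t) (TFst (TPair a b)) A" using c TPair by simp
    also have "eqv \<Gamma> (TFst (TPair a b)) a A" using ab by (rule ax_fst_beta)
    finally show ?thesis using TPair by simp
  qed (use c in simp_all)
next
  case (ty_snd \<Gamma> t A B)
  have c: "eqv \<Gamma> (TSnd t) (TSnd (nstep t)) B" by (rule cg_snd[OF ty_snd.IH])
  show ?case
  proof (cases "nstep t")
    case (TPair a b)
    have "typing \<Gamma> (TPair a b) (TyProd A B)" using eqv_typing[OF ty_snd.IH] TPair by simp
    then have ab: "typing \<Gamma> a A" "typing \<Gamma> b B" by (auto elim: tyPairE)
    have "eqv \<Gamma> (TSnd t) (TSnd (TPair a b)) B" using c TPair by simp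
    also have "eqv \<Gamma> (TSnd (TPair a b)) b B" using ab by (rule ax_snd_beta)
    finally show ?thesis using TPair by simp
  qed (use c in simp_all)
next
  case (ty_lam A \<Gamma> t B) then show ?case by (simp add: eqv_refl typing.ty_lam)
next
  case (ty_app \<Gamma> t A B u) then show ?case by (simp, meson cg_app)
next
  case (ty_letmap \<Gamma> t A u B)
  have cg: "eqv \<Gamma> (TLetmap t u) (TLetmap (nstep t) (nstep u)) (TyDia B)"
    using ty_letmap.IH by (rule cg_letmap)
  have tu: "typing (A#\<Gamma>) (nstep u) B" using eqv_typing[OF ty_letmap.IH(2)] by simp
  have tt: "typing \<Gamma> (nstep t) (TyDia A)" using eqv_typing[OF ty_letmap.IH(1)] by simp
  have dflt: "eqv \<Gamma> (TLetmap t u) (if nstep u = TVar 0 then nstep t else TLetmap (nstep t) (nstep u)) (TyDia B)"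
  proof (cases "nstep u = TVar 0")
    case True
    then have "B = A" using tu by (auto elim: tyVarE)
    have ax: "eqv \<Gamma> (nstep t) (TLetmap (nstep t) (TVar 0)) (TyDia A)" using tt by (rule ax_letmap_id)
    have "eqv \<Gamma> (TLetmap (nstep t) (nstep u)) (nstep t) (TyDia B)" using eq_sym[OF ax] True \<open>B = A\<close> by simp
    then show ?thesis using eq_trans[OF cg] True by simp
  qed (use cg in simp)
  show ?case
  proof (cases "nstep t")
    case (TLetmap t1 u1)
    have "typing \<Gamma> (TLetmap t1 u1) (TyDia A)" using tt TLetmap by simp
    then obtain A1 where "typing \<Gamma> t1 (TyDia A1)" "typing (A1#\<Gamma>) u1 A" by (auto elim: tyLetmapE)
    then have ax: "eqv \<Gamma> (TLetmap (TLetmap t1 u1) (nstep u)) (TLetmap t1 (subst 0 u1 (lift 1 (nstep u)))) (TyDia B)"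
      using tu by (rule ax_letmap_letmap)
    have "eqv \<Gamma> (TLetmap t u) (TLetmap (TLetmap t1 u1) (nstep u)) (TyDia B)" using cg TLetmap by simp
    from eq_trans[OF this ax] show ?thesis using TLetmap by simp
  next
    case (TLet t1 u1)
    have "typing \<Gamma> (TLet t1 u1) (TyDia A)" using tt TLet by simp
    then obtain A1 where "typing \<Gamma> t1 (TyDia A1)" "typing (A1#\<Gamma>) u1 (TyDia A)" by (auto elim: tyLetE)
    then have ax: "eqv \<Gamma> (TLetmap (TLet t1 u1) (nstep u)) (TLet t1 (TLetmap u1 (lift 1 (nstep u)))) (TyDia B)"
      using tu by (rule ax_letmap_let)
    have "eqv \<Gamma> (TLetmap t u) (TLetmap (TLet t1 u1) (nstep u)) (TyDia B)" using cg TLet by simp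
    from eq_trans[OF this ax] show ?thesis using TLet by simp
  qed (use dflt in simp_all)
next
  case (ty_let \<Gamma> t A u B)
  have cg: "eqv \<Gamma> (TLet t u) (TLet (nstep t) (nstep u)) (TyDia B)"
    using ty_let.IH by (rule cg_let)
  have tu: "typing (A#\<Gamma>) (nstep u) (TyDia B)" using eqv_typing[OF ty_let.IH(2)] by simp
  have tt: "typing \<Gamma> (nstep t) (TyDia A)" using eqv_typing[OF ty_let.IH(1)] by simp
  show ?case
  proof (cases "nstep t")
    case (TLetmap t1 u1)
    have "typing \<Gamma> (TLetmap t1 u1) (TyDia A)" using tt TLetmap by simp
    then obtain A1 where "typing \<Gamma> t1 (TyDia A1)" "typing (A1#\<Gamma>) u1 A" by (auto elim: tyLetmapE)
    then have ax: "eqv \<Gamma> (TLet (TLetmap t1 u1) (nstep u)) (TLet t1 (subst 0 u1 (lift 1 (nstep u)))) (TyDia B)"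
      using tu by (rule ax_let_letmap)
    have "eqv \<Gamma> (TLet t u) (TLet (TLetmap t1 u1) (nstep u)) (TyDia B)" using cg TLetmap by simp
    from eq_trans[OF this ax] show ?thesis using TLetmap by simp
  next
    case (TLet t1 u1)
    have "typing \<Gamma> (TLet t1 u1) (TyDia A)" using tt TLet by simp
    then obtain A1 where "typing \<Gamma> t1 (TyDia A1)" "typing (A1#\<Gamma>) u1 (TyDia A)" by (auto elim: tyLetE)
    then have ax: "eqv \<Gamma> (TLet (TLet t1 u1) (nstep u)) (TLet t1 (TLet u1 (lift 1 (nstep u)))) (TyDia B)"
      using tu by (rule ax_let_let)
    have "eqv \<Gamma> (TLet t u) (TLet (TLet t1 u1) (nstep u)) (TyDia B)" using cg TLet by simp
    from eq_trans[OF this ax] show ?thesis using TLet by simp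
  qed (use cg in simp_all)
qed

fun nsteps :: "nat \<Rightarrow> tm \<Rightarrow> tm" where
  "nsteps 0 t = t"
| "nsteps (Suc n) t = nsteps n (nstep t)"

lemma nsteps_sound: "typing G t A \<Longrightarrow> eqv G t (nsteps n t) A"
proof (induction n arbitrary: t)
  case 0 then show ?case by (simp add: eqv_refl)
next
  case (Suc n)
  have "eqv G t (nstep t) A" using Suc.prems by (rule nstep_sound)
  moreover have "eqv G (nstep t) (nsteps n (nstep t)) A" using Suc.IH eqv_typing calculation by blast
  ultimately have "eqv G t (nsteps n (nstep t)) A" by (rule eq_trans)
  then show ?case by simp
qed

lemma norm_eqv: "typing G t A \<Longrightarrow> typing G u A \<Longrightarrow> nsteps n t = nsteps n u \<Longrightarrow> eqv G t u A"
  by (metis eq_sym eq_trans nsteps_sound)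

lemma ty_var': "i < length G \<Longrightarrow> G ! i = A \<Longrightarrow> typing G (TVar i) A"
  using typing.ty_var by blast

lemmas tyR = typing.ty_unit typing.ty_pair typing.ty_fst typing.ty_snd typing.ty_lam typing.ty_app
  typing.ty_letmap typing.ty_let ty_var'

lemma nsteps_numeral[simp]: "nsteps (numeral k) t = nsteps (pred_numeral k) (nstep t)"
  by (simp add: numeral_eq_Suc)

lemma mor_norm: "typing [X] t Y \<Longrightarrow> typing [X] u Y \<Longrightarrow> nsteps n t = nsteps n u \<Longrightarrow> mor X Y t = mor X Y u"
  by (rule mor_eqI, rule norm_eqv)

lemma tyS:
  "typing G (TVar i) A \<longleftrightarrow> i < length G \<and> G ! i = A"
  "typing G TUnit A \<longleftrightarrow> A = TyUnit"
  "typing G (TPair t u) A \<longleftrightarrow> (\<exists>B C. A = TyProd B C \<and> typing G t B \<and> typing G u C)"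
  "typing G (TFst t) A \<longleftrightarrow> (\<exists>B. typing G t (TyProd A B))"
  "typing G (TSnd t) A \<longleftrightarrow> (\<exists>B. typing G t (TyProd B A))"
  "typing G (TLam C t) A \<longleftrightarrow> (\<exists>B. A = TyArr C B \<and> typing (C#G) t B)"
  "typing G (TApp t u) A \<longleftrightarrow> (\<exists>B. typing G t (TyArr B A) \<and> typing G u B)"
  "typing G (TLetmap t u) A \<longleftrightarrow> (\<exists>B C. A = TyDia C \<and> typing G t (TyDia B) \<and> typing (B#G) u C)"
  "typing G (TLet t u) A \<longleftrightarrow> (\<exists>B C. A = TyDia C \<and> typing G t (TyDia B) \<and> typing (B#G) u (TyDia C))"
  by (auto elim: tyVarE tyUnitE tyPairE tyFstE tySndE tyLamE tyAppE tyLetmapE tyLetE intro: tyR) (blast elim: tyLetmapE tyLetE)+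

lemma st_unit_TM2:
  "cmp TM (Dar TM (pi2 TM (trm TM) (ob A))) (st TM (trm TM) (ob A)) = pi2 TM (trm TM) (Dob TM (ob A))"
  apply (simp add: tyS Dar_mor cmp_mor)
  apply (rule mor_norm[where n=6])
  apply (simp_all add: tyS)
  done

lemma st_unit_TM:
  "cmp TM (Dar TM (pi2 TM (trm TM) (ob A))) (st TM (trm TM) (ob A)) = pi2 TM (trm TM) (Dob TM (ob A))"
proof -
  have t1: "typing [TyProd TyUnit A] (TSnd (TVar 0)) A" by (intro tyR; simp)
  have t2: "typing [TyDia (TyProd TyUnit A)] (TLetmap (TVar 0) (msubst (sb (TVar 0)) (TSnd (TVar 0)))) (TyDia A)"
    by (simp, intro tyR; simp)
  have t3: "typing [TyProd TyUnit (TyDia A)] (TLetmap (TSnd (TVar 0)) (TPair (TFst (TVar (Suc 0))) (TVar 0))) (TyDia (TyProd TyUnit A))"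
    by (intro tyR; simp)
  have t4: "typing [TyProd TyUnit (TyDia A)] (msubst (sb (TLetmap (TSnd (TVar 0)) (TPair (TFst (TVar (Suc 0))) (TVar 0))))
        (TLetmap (TVar 0) (msubst (sb (TVar 0)) (TSnd (TVar 0))))) (TyDia A)"
    by (simp, (rule tyR | simp)+)
  have t5: "typing [TyProd TyUnit (TyDia A)] (TSnd (TVar 0)) (TyDia A)" by (intro tyR; simp)
  show ?thesis
    using Dar_mor[OF t1] cmp_mor[OF t3 t2] mor_norm[OF t4 t5, of 6] by simp
qed

lemma st_assoc_TM:
  "cmp TM (Dar TM (alpha TM (ob A) (ob B) (ob C))) (st TM (prd TM (ob A) (ob B)) (ob C))
   = cmp TM (st TM (ob A) (prd TM (ob B) (ob C)))
      (cmp TM (parr TM (ob A) (prd TM (ob B) (Dob TM (ob C))) (idm TM (ob A)) (st TM (ob B) (ob C))) (alpha TM (ob A) (ob B) (Dob TM (ob C))))"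
  apply (simp add: tyS Dar_mor cmp_mor tup_mor alpha_def parr_def)
  apply (rule mor_norm[where n=8])
  apply (simp_all add: tyS)
  done

lemma mu_assoc_TM: "cmp TM (mu TM (ob A)) (mu TM (Dob TM (ob A))) = cmp TM (mu TM (ob A)) (Dar TM (mu TM (ob A)))"
  apply (simp add: tyS Dar_mor cmp_mor)
  apply (rule mor_norm[where n=8])
  apply (simp_all add: tyS)
  done

lemma mu_st_TM:
  "cmp TM (mu TM (prd TM (ob A) (ob B))) (cmp TM (Dar TM (st TM (ob A) (ob B))) (st TM (ob A) (Dob TM (ob B))))
   = cmp TM (st TM (ob A) (ob B)) (parr TM (ob A) (Dob TM (Dob TM (ob B))) (idm TM (ob A)) (mu TM (ob B)))"
  apply (simp add: tyS Dar_mor cmp_mor tup_mor parr_def)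
  apply (rule mor_norm[where n=8])
  apply (simp_all add: tyS)
  done

definition clo :: "ty \<Rightarrow> tm \<Rightarrow> tm" where
  "clo A p = TLam A (msubst (\<lambda>_. TVar 0) p)"

lemma clo_msubst[simp]: "msubst s (clo A p) = clo A p"
  by (simp add: clo_def msubst_msubst)

lemma clo_ren[simp]: "ren r (clo A p) = clo A p"
  by (simp add: clo_def ren_msubst comp_def)

lemma clo_lift[simp]: "lift k (clo A p) = clo A p"
  by (simp add: lift_ren)

lemma clo_subst[simp]: "subst k s (clo A p) = clo A p"
  by (simp add: subst_msubst)

lemma clo_nstep[simp]: "nstep (clo A p) = clo A p"
  by (simp add: clo_def)

lemma clo_typing: "typing [A] p B \<Longrightarrow> typing G (clo A p) (TyArr A B)"
  unfolding clo_def by (rule ty_lam, rule typing_msubst1, assumption) (simp add: typing_var0)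

lemma clo_typing_iff[simp]: "typing [A] p B \<Longrightarrow> typing G (clo A p) T \<longleftrightarrow> T = TyArr A B"
  using clo_typing typing_unique by blast

lemma clo_beta:
  assumes p: "typing [A] p B" and s: "typing G s A"
  shows "eqv G (TApp (clo A p) s) (msubst (sb s) p) B"
proof -
  have b: "typing (A#G) (msubst (\<lambda>_. TVar 0) p) B" by (rule typing_msubst1[OF p]) (simp add: typing_var0)
  have "eqv G (TApp (clo A p) s) (subst 0 s (msubst (\<lambda>_. TVar 0) p)) B"
    unfolding clo_def by (rule ax_fun_beta[OF b s])
  also have "subst 0 s (msubst (\<lambda>_. TVar 0) p) = msubst (\<lambda>_. s) p"
    by (simp add: subst_msubst msubst_msubst substf_def)
  also have "eqv G (msubst (\<lambda>_. s) p) (msubst (sb s) p) B"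
    by (rule msub_cmp[OF p]) (simp_all add: s)
  finally show ?thesis .
qed

lemma mor_clo: "typing [A] p B \<Longrightarrow> mor A B p = mor A B (TApp (clo A p) (TVar 0))"
  by (rule mor_eqI, rule eq_sym, rule eq_trans, rule clo_beta, assumption, rule typing_var0,
      rule eqv_msubst_id[where G="[]"]) (simp_all add: eqv_refl typing_var0)

lemma st_nat_TM:
  assumes p: "typing [A] p A'" and q: "typing [B] q B'"
  shows "cmp TM (st TM (ob A') (ob B')) (parr TM (ob A) (Dob TM (ob B)) (mor A A' p) (Dar TM (mor B B' q)))
        = cmp TM (Dar TM (parr TM (ob A) (ob B) (mor A A' p) (mor B B' q))) (st TM (ob A) (ob B))"
  using p q
  apply (simp add: mor_clo[OF p] mor_clo[OF q])
  apply (simp add: tyS Dar_mor cmp_mor tup_mor parr_def)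
  apply (rule mor_norm[where n=8])
  apply (simp_all add: tyS)
  done

lemma mu_nat_TM:
  assumes p: "typing [A] p B"
  shows "cmp TM (mu TM (ob B)) (Dar TM (Dar TM (mor A B p))) = cmp TM (Dar TM (mor A B p)) (mu TM (ob A))"
  using p
  apply (simp add: mor_clo[OF p])
  apply (simp add: tyS Dar_mor cmp_mor)
  apply (rule mor_norm[where n=8])
  apply (simp_all add: tyS)
  done

lemma TM_strength: "is_strength TM"
  unfolding is_strength_def
proof (intro conjI ballI allI impI)
  fix X Y assume "X \<in> Ob TM" "Y \<in> Ob TM"
  then obtain A B where "X = ob A" "Y = ob B" by (meson ObE)
  then show "st TM X Y \<in> hom TM (prd TM X (Dob TM Y)) (Dob TM (prd TM X Y))"
    using hom_mor[of "TyProd A (TyDia B)" "TLetmap (TSnd (TVar 0)) (TPair (TFst (TVar (Suc 0))) (TVar 0))" "TyDia (TyProd A B)"]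
    by (simp add: tyS)
next
  fix X X' Y Y' f g assume "f \<in> hom TM X X'" "g \<in> hom TM Y Y'"
  then obtain A A' p B B' q where 1: "f = mor A A' p" "typing [A] p A'" "X = ob A" "X' = ob A'"
    and 2: "g = mor B B' q" "typing [B] q B'" "Y = ob B" "Y' = ob B'" by (meson homE)
  show "cmp TM (st TM X' Y') (parr TM X (Dob TM Y) f (Dar TM g)) = cmp TM (Dar TM (parr TM X Y f g)) (st TM X Y)"
    using st_nat_TM[OF 1(2) 2(2)] 1 2 by simp
next
  fix X assume "X \<in> Ob TM"
  then obtain A where "X = ob A" by (meson ObE)
  then show "cmp TM (Dar TM (pi2 TM (trm TM) X)) (st TM (trm TM) X) = pi2 TM (trm TM) (Dob TM X)"
    using st_unit_TM2 by simp
next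
  fix X Y Z assume "X \<in> Ob TM" "Y \<in> Ob TM" "Z \<in> Ob TM"
  then obtain A B C where "X = ob A" "Y = ob B" "Z = ob C" by (meson ObE)
  then show "cmp TM (Dar TM (alpha TM X Y Z)) (st TM (prd TM X Y) Z) =
       cmp TM (st TM X (prd TM Y Z)) (cmp TM (parr TM X (prd TM Y (Dob TM Z)) (idm TM X) (st TM Y Z)) (alpha TM X Y (Dob TM Z)))"
    using st_assoc_TM by simp
qed

lemma TM_mult: "is_strong_semimonad_mult TM"
  unfolding is_strong_semimonad_mult_def
proof (intro conjI ballI allI impI)
  fix X assume "X \<in> Ob TM"
  then obtain A where "X = ob A" by (meson ObE)
  then show "mu TM X \<in> hom TM (Dob TM (Dob TM X)) (Dob TM X)"
    using hom_mor[of "TyDia (TyDia A)" "TLet (TVar 0) (TVar 0)" "TyDia A"] by (simp add: tyS)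
next
  fix X Y f assume "f \<in> hom TM X Y"
  then obtain A B p where 1: "f = mor A B p" "typing [A] p B" "X = ob A" "Y = ob B" by (meson homE)
  then show "cmp TM (mu TM Y) (Dar TM (Dar TM f)) = cmp TM (Dar TM f) (mu TM X)"
    using mu_nat_TM[OF 1(2)] by simp
next
  fix X assume "X \<in> Ob TM"
  then obtain A where "X = ob A" by (meson ObE)
  then show "cmp TM (mu TM X) (mu TM (Dob TM X)) = cmp TM (mu TM X) (Dar TM (mu TM X))"
    using mu_assoc_TM by simp
next
  fix X Y assume "X \<in> Ob TM" "Y \<in> Ob TM"
  then obtain A B where "X = ob A" "Y = ob B" by (meson ObE)
  then show "cmp TM (mu TM (prd TM X Y)) (cmp TM (Dar TM (st TM X Y)) (st TM X (Dob TM Y))) =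
       cmp TM (st TM X Y) (parr TM X (Dob TM (Dob TM Y)) (idm TM X) (mu TM Y))"
    using mu_st_TM by simp
qed

lemma TM_model: "is_sj_model TM"
  unfolding is_sj_model_def
  using TM_category TM_terminal TM_products TM_exponentials TM_functor TM_strength TM_mult by blast

fun cty :: "ty list \<Rightarrow> ty" where
  "cty [] = TyUnit"
| "cty (A#G) = TyProd (cty G) A"

fun proj :: "ty list \<Rightarrow> nat \<Rightarrow> tm" where
  "proj (A#G) 0 = TSnd (TVar 0)"
| "proj (A#G) (Suc i) = msubst (sb (TFst (TVar 0))) (proj G i)"
| "proj [] i = TVar 0"

fun tuple :: "ty list \<Rightarrow> tm" where
  "tuple [] = TUnit"
| "tuple (A#G) = TPair (ren Suc (tuple G)) (TVar 0)"

abbreviation "\<iota>0 \<equiv> ob TyBase"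

lemma ty_obj_TM[simp]: "ty_obj TM \<iota>0 A = ob A"
  by (induction A) simp_all

lemma ctx_obj_TM[simp]: "ctx_obj TM \<iota>0 G = ob (cty G)"
  by (induction G) simp_all

lemma typing_proj: "i < length G \<Longrightarrow> typing [cty G] (proj G i) (G ! i)"
proof (induction G arbitrary: i)
  case Nil then show ?case by simp
next
  case (Cons A G)
  show ?case
  proof (cases i)
    case 0 then show ?thesis by (simp add: tyS)
  next
    case (Suc j)
    then have pj: "typing [cty G] (proj G j) (G ! j)" using Cons by simp
    show ?thesis using Suc typing_msubst1[OF pj, of "[cty (A#G)]" "sb (TFst (TVar 0))"] by (simp add: tyS)
  qed
qed

lemma typing_proj_all: "\<forall>i<length G. typing [cty G] (proj G i) (G ! i)"
  using typing_proj by blast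

lemma typing_tuple: "typing G (tuple G) (cty G)"
proof (induction G)
  case Nil then show ?case by (simp add: tyS)
next
  case (Cons A G) then show ?case by (simp add: tyS typing_wk)
qed

lemma var_sem_TM: "i < length G \<Longrightarrow> var_sem TM \<iota>0 G i = mor (cty G) (G ! i) (proj G i)"
proof (induction G arbitrary: i)
  case Nil then show ?case by simp
next
  case (Cons A G)
  show ?case
  proof (cases i)
    case 0 then show ?thesis by simp
  next
    case (Suc j)
    then have j: "j < length G" using Cons by simp
    have t1: "typing [TyProd (cty G) A] (TFst (TVar 0)) (cty G)" by (simp add: tyS)
    show ?thesis using Suc Cons.IH[OF j] cmp_mor[OF t1 typing_proj[OF j]] by simp
  qed
qed

lemma proj_shift:
  assumes i: "i < length (A#G)"
  shows "eqv [A, cty G] (msubst (sb (TPair (TVar (Suc 0)) (TVar 0))) (proj (A#G) i)) (shs (proj G) i) ((A#G) ! i)"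
proof (cases i)
  case 0 then show ?thesis by simp (rule ax_snd_beta, simp_all add: tyS)
next
  case (Suc j)
  then have j: "j < length G" using i by simp
  have "msubst (sb (TPair (TVar (Suc 0)) (TVar 0))) (proj (A#G) i)
      = msubst (\<lambda>k. msubst (sb (TPair (TVar (Suc 0)) (TVar 0))) (sb (TFst (TVar 0)) k)) (proj G j)"
    using Suc by (simp add: msubst_msubst)
  also have "eqv [A, cty G] \<dots> (msubst (TVar \<circ> Suc) (proj G j)) (G ! j)"
    by (rule eqv_msubst1[OF typing_proj[OF j]]) (simp, rule ax_fst_beta, simp_all add: tyS)
  also have "msubst (TVar \<circ> Suc) (proj G j) = shs (proj G) i"
    using Suc by (simp add: ren_as_msubst)
  finally show ?thesis using Suc by simp
qed

lemma body_shift: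
  assumes u: "typing (A#G) u B"
  shows "eqv [A, cty G] (msubst (sb (TPair (TVar (Suc 0)) (TVar 0))) (msubst (proj (A#G)) u)) (msubst (shs (proj G)) u) B"
proof -
  have "msubst (sb (TPair (TVar (Suc 0)) (TVar 0))) (msubst (proj (A#G)) u)
     = msubst (\<lambda>i. msubst (sb (TPair (TVar (Suc 0)) (TVar 0))) (proj (A#G) i)) u"
    by (simp add: msubst_msubst)
  also have "eqv [A, cty G] \<dots> (msubst (shs (proj G)) u) B"
    by (rule eqv_msubst_pw[OF u]) (use proj_shift in auto)
  finally show ?thesis .
qed

lemma typing_star: "typing G t A \<Longrightarrow> typing [cty G] (msubst (proj G) t) A"
  using typing_msubst typing_proj_all by blast

lemma clo_v: "typing [X] p Y \<Longrightarrow> eqv [X] p (TApp (clo X p) (TVar 0)) Y"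
  by (metis mor_clo mor_eq_iff typing.ty_app clo_typing typing_var0)

lemma clo_pair:
  assumes u: "typing (A#G) u B"
  shows "eqv [A, cty G] (msubst (shs (proj G)) u)
     (TApp (clo (TyProd (cty G) A) (msubst (proj (A#G)) u)) (TPair (TVar (Suc 0)) (TVar 0))) B"
proof -
  have us: "typing [TyProd (cty G) A] (msubst (proj (A#G)) u) B" using typing_star[OF u] by simp
  have tp: "typing [A, cty G] (TPair (TVar (Suc 0)) (TVar 0)) (TyProd (cty G) A)" by (simp add: tyS)
  have "eqv [A, cty G] (TApp (clo (TyProd (cty G) A) (msubst (proj (A#G)) u)) (TPair (TVar (Suc 0)) (TVar 0)))
      (msubst (sb (TPair (TVar (Suc 0)) (TVar 0))) (msubst (proj (A#G)) u)) B"
    by (rule clo_beta[OF us tp])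
  also have "eqv [A, cty G] (msubst (sb (TPair (TVar (Suc 0)) (TVar 0))) (msubst (proj (A#G)) u)) (msubst (shs (proj G)) u) B"
    by (rule body_shift[OF u])
  finally show ?thesis by (rule eq_sym)
qed

lemma sem_TM: "typing G t A \<Longrightarrow> sem TM \<iota>0 G t = mor (cty G) A (msubst (proj G) t)"
proof (induction rule: typing.induct)
  case (ty_var i \<Gamma>) then show ?case by (simp add: var_sem_TM)
next
  case (ty_unit \<Gamma>) then show ?case by simp
next
  case (ty_pair \<Gamma> t A u B) then show ?case by (simp add: tup_mor typing_star)
next
  case (ty_fst \<Gamma> t A B)
  have t1: "typing [TyProd A B] (TFst (TVar 0)) A" by (simp add: tyS)
  show ?case using ty_fst cmp_mor[OF typing_star[OF ty_fst(1)] t1] by (simp add: tyof_eq[OF ty_fst(1)])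
next
  case (ty_snd \<Gamma> t A B)
  have t1: "typing [TyProd A B] (TSnd (TVar 0)) B" by (simp add: tyS)
  show ?case using ty_snd cmp_mor[OF typing_star[OF ty_snd(1)] t1] by (simp add: tyof_eq[OF ty_snd(1)])
next
  case (ty_lam A \<Gamma> t B)
  have us: "typing [TyProd (cty \<Gamma>) A] (msubst (proj (A#\<Gamma>)) t) B" using typing_star[OF ty_lam(1)] by simp
  have "mor (cty \<Gamma>) (TyArr A B) (TLam A (msubst (sb (TPair (TVar (Suc 0)) (TVar 0))) (msubst (proj (A#\<Gamma>)) t)))
     = mor (cty \<Gamma>) (TyArr A B) (TLam A (msubst (shs (proj \<Gamma>)) t))"
    by (rule mor_eqI, rule cg_lam, rule body_shift[OF ty_lam(1)])
  then show ?case using ty_lam.IH cur_mor[OF us] by simp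
next
  case (ty_app \<Gamma> t A B u)
  have ts: "typing [cty \<Gamma>] (msubst (proj \<Gamma>) t) (TyArr A B)" by (rule typing_star[OF ty_app(1)])
  have us: "typing [cty \<Gamma>] (msubst (proj \<Gamma>) u) A" by (rule typing_star[OF ty_app(2)])
  have te: "typing [TyProd (TyArr A B) A] (TApp (TFst (TVar 0)) (TSnd (TVar 0))) B" by (simp add: tyS)
  have tp: "typing [cty \<Gamma>] (TPair (msubst (proj \<Gamma>) t) (msubst (proj \<Gamma>) u)) (TyProd (TyArr A B) A)"
    using ts us by (rule ty_pair)
  have "eqv [cty \<Gamma>] (TApp (TFst (TPair (msubst (proj \<Gamma>) t) (msubst (proj \<Gamma>) u))) (TSnd (TPair (msubst (proj \<Gamma>) t) (msubst (proj \<Gamma>) u))))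
      (TApp (msubst (proj \<Gamma>) t) (msubst (proj \<Gamma>) u)) B"
    by (rule cg_app, rule ax_fst_beta[OF ts us], rule ax_snd_beta[OF ts us])
  then show ?case using ty_app.IH tup_mor[OF ts us] cmp_mor[OF tp te] mor_eqI
    by (simp add: tyof_eq[OF ty_app(1)])
next
  case (ty_letmap \<Gamma> t A u B)
  let ?C = "cty \<Gamma>"
  define ts where "ts = msubst (proj \<Gamma>) t"
  define us where "us = msubst (proj (A#\<Gamma>)) u"
  have tts: "typing [?C] ts (TyDia A)" unfolding ts_def by (rule typing_star[OF ty_letmap(1)])
  have tus: "typing [TyProd ?C A] us B" unfolding us_def using typing_star[OF ty_letmap(2)] by simp
  have "sem TM \<iota>0 \<Gamma> (TLetmap t u) = cmp TM (Dar TM (mor (TyProd ?C A) B (TApp (clo (TyProd ?C A) us) (TVar 0))))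
      (cmp TM (st TM (ob ?C) (ob A)) (tup TM (idm TM (ob ?C)) (mor ?C (TyDia A) (TApp (clo ?C ts) (TVar 0)))))"
    using ty_letmap.IH mor_clo[OF tts] mor_clo[OF tus]
    by (simp add: tyof_eq[OF ty_letmap(1)] Let_def ts_def us_def)
  also have "\<dots> = mor ?C (TyDia B) (TLetmap (TApp (clo ?C ts) (TVar 0)) (TApp (clo (TyProd ?C A) us) (TPair (TVar (Suc 0)) (TVar 0))))"
    using tts tus
    apply (simp add: tyS Dar_mor cmp_mor tup_mor)
    apply (rule mor_norm[where n=8])
      apply (simp_all add: tyS)
    done
  also have "\<dots> = mor ?C (TyDia B) (msubst (proj \<Gamma>) (TLetmap t u))"
  proof (rule mor_eqI, simp, rule eq_sym, rule cg_letmap)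
    show "eqv [?C] (msubst (proj \<Gamma>) t) (TApp (clo ?C ts) (TVar 0)) (TyDia A)"
      using clo_v[OF tts] by (simp add: ts_def)
    show "eqv [A, ?C] (msubst (shs (proj \<Gamma>)) u) (TApp (clo (TyProd ?C A) us) (TPair (TVar (Suc 0)) (TVar 0))) B"
      using clo_pair[OF ty_letmap(2)] by (simp add: us_def)
  qed
  finally show ?case .
next
  case (ty_let \<Gamma> t A u B)
  let ?C = "cty \<Gamma>"
  define ts where "ts = msubst (proj \<Gamma>) t"
  define us where "us = msubst (proj (A#\<Gamma>)) u"
  have tts: "typing [?C] ts (TyDia A)" unfolding ts_def by (rule typing_star[OF ty_let(1)])
  have tus: "typing [TyProd ?C A] us (TyDia B)" unfolding us_def using typing_star[OF ty_let(2)] by simp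
  have "sem TM \<iota>0 \<Gamma> (TLet t u) = cmp TM (mu TM (ob B)) (cmp TM (Dar TM (mor (TyProd ?C A) (TyDia B) (TApp (clo (TyProd ?C A) us) (TVar 0))))
      (cmp TM (st TM (ob ?C) (ob A)) (tup TM (idm TM (ob ?C)) (mor ?C (TyDia A) (TApp (clo ?C ts) (TVar 0))))))"
    using ty_let.IH mor_clo[OF tts] mor_clo[OF tus]
    by (simp add: tyof_eq[OF ty_let(1)] tyof_eq[OF ty_let(2)] Let_def ts_def us_def)
  also have "\<dots> = mor ?C (TyDia B) (TLet (TApp (clo ?C ts) (TVar 0)) (TApp (clo (TyProd ?C A) us) (TPair (TVar (Suc 0)) (TVar 0))))"
    using tts tus
    apply (simp add: tyS Dar_mor cmp_mor tup_mor)
    apply (rule mor_norm[where n=8])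
      apply (simp_all add: tyS)
    done
  also have "\<dots> = mor ?C (TyDia B) (msubst (proj \<Gamma>) (TLet t u))"
  proof (rule mor_eqI, simp, rule eq_sym, rule cg_let)
    show "eqv [?C] (msubst (proj \<Gamma>) t) (TApp (clo ?C ts) (TVar 0)) (TyDia A)"
      using clo_v[OF tts] by (simp add: ts_def)
    show "eqv [A, ?C] (msubst (shs (proj \<Gamma>)) u) (TApp (clo (TyProd ?C A) us) (TPair (TVar (Suc 0)) (TVar 0))) (TyDia B)"
      using clo_pair[OF ty_let(2)] by (simp add: us_def)
  qed
  finally show ?case .
qed

lemma back_proj: "i < length G \<Longrightarrow> eqv G (msubst (sb (tuple G)) (proj G i)) (TVar i) (G ! i)"
proof (induction G arbitrary: i)
  case Nil then show ?case by simp
next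
  case (Cons A G)
  have tw: "typing (A#G) (ren Suc (tuple G)) (cty G)" by (rule typing_wk[OF typing_tuple])
  have v0: "typing (A#G) (TVar 0) A" by (rule typing_var0)
  show ?case
  proof (cases i)
    case 0 then show ?thesis using ax_snd_beta[OF tw v0] by simp
  next
    case (Suc j)
    then have j: "j < length G" using Cons by simp
    have "msubst (sb (tuple (A#G))) (proj (A#G) i)
        = msubst (\<lambda>k. msubst (sb (tuple (A#G))) (sb (TFst (TVar 0)) k)) (proj G j)"
      using Suc by (simp add: msubst_msubst)
    also have "eqv (A#G) \<dots> (msubst (ren Suc \<circ> sb (tuple G)) (proj G j)) (G ! j)"
      by (rule eqv_msubst1[OF typing_proj[OF j]]) (simp, rule ax_fst_beta[OF tw v0])
    also have "msubst (ren Suc \<circ> sb (tuple G)) (proj G j) = ren Suc (msubst (sb (tuple G)) (proj G j))"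
      by (simp add: ren_msubst)
    also have "eqv (A#G) \<dots> (ren Suc (TVar j)) (G ! j)"
      by (rule eqv_wk[OF Cons.IH[OF j]])
    finally show ?thesis using Suc by simp
  qed
qed

lemma completeness_TM:
  assumes t: "typing G t A" and u: "typing G u A" and e: "sem TM \<iota>0 G t = sem TM \<iota>0 G u"
  shows "eqv G t u A"
proof -
  have "eqv [cty G] (msubst (proj G) t) (msubst (proj G) u) A"
    using e sem_TM[OF t] sem_TM[OF u] mor_eq_iff[OF typing_star[OF t] typing_star[OF u]] by simp
  then have 1: "eqv G (msubst (sb (tuple G)) (msubst (proj G) t)) (msubst (sb (tuple G)) (msubst (proj G) u)) A"
    by (rule eqv_msubst) (simp add: typing_tuple)
  have bp: "\<forall>i<length G. eqv G (msubst (sb (tuple G)) (proj G i)) (TVar i) (G ! i)"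
    using back_proj by blast
  have 2: "eqv G (msubst (sb (tuple G)) (msubst (proj G) t)) t A"
    using eqv_msubst_pw[OF t bp] by (simp add: msubst_msubst)
  have 3: "eqv G (msubst (sb (tuple G)) (msubst (proj G) u)) u A"
    using eqv_msubst_pw[OF u bp] by (simp add: msubst_msubst)
  show ?thesis using eq_trans[OF eq_trans[OF eq_sym[OF 2] 1] 3] .
qed

theorem proposition3p3:
  fixes \<Gamma> :: "ty list" and t u :: tm and A :: ty
  assumes "typing \<Gamma> t A" and "typing \<Gamma> u A"
  shows "(eqv \<Gamma> t u A \<longrightarrow>
            (\<forall>(M :: ('o, 'm) sj_model) \<iota>. is_sj_model M \<and> \<iota> \<in> Ob M \<longrightarrow>
               sem M \<iota> \<Gamma> t = sem M \<iota> \<Gamma> u))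
       \<and> ((\<forall>(M :: (nat, nat) sj_model) \<iota>. is_sj_model M \<and> \<iota> \<in> Ob M \<longrightarrow>
               sem M \<iota> \<Gamma> t = sem M \<iota> \<Gamma> u)
            \<longrightarrow> eqv \<Gamma> t u A)"
proof (intro conjI impI allI)
  fix M :: "('o, 'm) sj_model" and \<iota>
  assume e: "eqv \<Gamma> t u A" and m: "is_sj_model M \<and> \<iota> \<in> Ob M"
  then have "sjmi M \<iota>" by (simp add: sjmi_def sjm_def sjmi_axioms_def)
  then show "sem M \<iota> \<Gamma> t = sem M \<iota> \<Gamma> u" using e by (rule sjmi.soundness)
next
  assume h: "\<forall>(M :: (nat, nat) sj_model) \<iota>. is_sj_model M \<and> \<iota> \<in> Ob M \<longrightarrow> sem M \<iota> \<Gamma> t = sem M \<iota> \<Gamma> u"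
  have "ob TyBase \<in> Ob TM" by simp
  then have "sem TM \<iota>0 \<Gamma> t = sem TM \<iota>0 \<Gamma> u" using h TM_model by blast
  then show "eqv \<Gamma> t u A" using completeness_TM assms by blast
qed

end
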